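(* Every $\lambda\in\Sigma_0$ is an eigenvalue of infinite multiplicity of the self-adjoint Hamiltonian $\mathcal{A}$. The corresponding eigenspace is the closed linear span of simple loop states, i.e. eigenfunctions $(u,\omega)$ whose edge part $u$ is supported on the six edges of a single hexagon and whose vertex values $\omega_v$ vanish at all vertices.
   Context: Fix $a>0$, $\kappa^{-1}\ge0$, $m\ge0$, $\rho:=a\kappa^{-1}$, real $q_0\in L^\infty(0,1)$ with $q_0(x)=q_0(1-x)$. $G$ is the hexagonal (honeycomb) lattice graph in $\mathbb R^2$ with edges of length 1, each identified with $[0,1]$ (potential $q_0$ on every edge); a hexagon is the 6-cycle bounding a face. For an edge $e$ and endpoint $v$, $\partial_nu_e(v)$ is the outward derivative ($-u_e'(0)$ at $x=0$, $u_e'(1)$ at $x=1$). Self-adjoint realization of $\mathcal A$: if $m>0$, on $\mathcal H=L^2(G)\oplus\ell^2(\mathcal V)$ with inner product $\sum_e\int_0^1u_e\bar w_e\,dx+m\sum_v\omega_v\bar\eta_v$, domain the pairs $(u,\omega)$ with $u_e\in H^2(0,1)$, $\sum_e\|u_e\|_{H^2}^2<\infty$, $\omega\in\ell^2(\mathcal V)$ and $u_e(v)+\rho\,\partial_nu_e(v)=\omega_v$ for every vertex $v$ and every edge $e\ni v$; $\mathcal A(u,\omega)=\big((-au_e''+q_0u_e)_e,\ (m^{-1}a\sum_{e\ni v}\partial_nu_e(v))_v\big)$. If $m=0$: on $L^2(G)$, $u\mapsto(-au_e''+q_0u_e)_e$ with domain the $u$ with $u_e\in H^2$, $\sum_e\|u_e\|^2_{H^2}<\infty$,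 such that at every vertex $u_e(v)+\rho\partial_nu_e(v)=:\omega_v$ is independent of $e\ni v$ and $\sum_{e\ni v}\partial_nu_e(v)=0$. Thus eigenfunctions satisfy $-au_e''+q_0u_e=\lambda u_e$, the semi-rigidity conditions, and $a\sum_{e\ni v}\partial_nu_e(v)=\lambda m\omega_v$. $\Sigma_0$: set of $\lambda\in\mathbb R$ for which $-au''+q_0u=\lambda u$ on $(0,1)$, $u(0)-\rho u'(0)=0$, $u(1)+\rho u'(1)=0$ has a nontrivial solution. *)

theory Defs
  imports "HOL-Analysis.Analysis"
begin

text \<open>Vertices: two sublattices A (flag True) and B (flag False), indexed by a cell in Z^2.
  Edges: ((p,q),d) joins the A-vertex of cell (p,q) with the B-vertex of cell (p,q) - delta d,
  where delta D0 = (0,0), delta D1 = (1,0), delta D2 = (0,1).  Every vertex has degree 3.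
  Each edge is identified with [0,1]: x = 0 is the A-end (tail), x = 1 is the B-end (head).\<close>

datatype dir = D0 | D1 | D2

type_synonym vertex = "(int \<times> int) \<times> bool"
type_synonym edge = "(int \<times> int) \<times> dir"

fun delta :: "dir \<Rightarrow> int \<times> int" where
  "delta D0 = (0, 0)"
| "delta D1 = (1, 0)"
| "delta D2 = (0, 1)"

definition tail :: "edge \<Rightarrow> vertex" where
  "tail e = (fst e, True)"

definition head :: "edge \<Rightarrow> vertex" where
  "head e = ((fst (fst e) - fst (delta (snd e)), snd (fst e) - snd (delta (snd e))), False)"

text \<open>The hexagon (face) attached to cell (i,j): the 6-cycle
  A(i,j) - B(i,j) - A(i+1,j) - B(i+1,j-1) - A(i+1,j-1) - B(i,j-1) - A(i,j).
  These are exactly the faces of the honeycomb.\<close>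

definition hexagon :: "int \<times> int \<Rightarrow> edge set" where
  "hexagon c = (case c of (i, j) \<Rightarrow>
     {((i, j), D0), ((i + 1, j), D1), ((i + 1, j), D2),
      ((i + 1, j - 1), D0), ((i + 1, j - 1), D1), ((i, j), D2)})"

text \<open>H2_triple y y1 y2: y belongs to H^2(0,1), with y1 its (classical) derivative on [0,1]
  (one-sided at the endpoints), y1 absolutely continuous with y1(x) = y1(0) + int_0^x y2,
  and the weak second derivative y2 in L^2(0,1).\<close>

definition H2_triple :: "(real \<Rightarrow> complex) \<Rightarrow> (real \<Rightarrow> complex) \<Rightarrow> (real \<Rightarrow> complex) \<Rightarrow> bool" where
  "H2_triple y y1 y2 \<longleftrightarrow>
     (\<forall>x\<in>{0..1}. (y has_vector_derivative y1 x) (at x within {0..1})) \<and>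
     set_borel_measurable lborel {0..1} y2 \<and>
     set_integrable lborel {0..1} (\<lambda>x. (cmod (y2 x))\<^sup>2) \<and>
     (\<forall>x\<in>{0..1}. (y2 has_integral (y1 x - y1 0)) {0..x})"

definition solves_ode :: "real \<Rightarrow> (real \<Rightarrow> real) \<Rightarrow> real \<Rightarrow> (real \<Rightarrow> complex) \<Rightarrow> (real \<Rightarrow> complex) \<Rightarrow> bool" where
  "solves_ode a q0 lam y y2 \<longleftrightarrow>
     (AE x in lborel. x \<in> {0..1} \<longrightarrow>
        - of_real a * y2 x + of_real (q0 x) * y x = of_real lam * y x)"

definition rho :: "real \<Rightarrow> real \<Rightarrow> real" where
  "rho a kinv = a * kinv"

text \<open>Sigma_0 (kinv stands for kappa^{-1}).\<close>

definition Sigma0 :: "real \<Rightarrow> real \<Rightarrow> (real \<Rightarrow> real) \<Rightarrow> real set" where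
  "Sigma0 a kinv q0 = {lam. \<exists>y y1 y2. H2_triple y y1 y2 \<and> solves_ode a q0 lam y y2 \<and>
      y 0 - of_real (rho a kinv) * y1 0 = 0 \<and> y 1 + of_real (rho a kinv) * y1 1 = 0 \<and>
      (\<exists>x\<in>{0..1}. y x \<noteq> 0)}"

text \<open>A state is a pair (u, omega) of edge functions and vertex values.  For m = 0 the weight
  m kills the vertex part of the inner product, so the same formulas describe L^2(G).\<close>

type_synonym state = "(edge \<Rightarrow> real \<Rightarrow> complex) \<times> (vertex \<Rightarrow> complex)"

definition in_H :: "real \<Rightarrow> state \<Rightarrow> bool" where
  "in_H m f \<longleftrightarrow>
     (\<forall>e. set_borel_measurable lborel {0..1} (fst f e) \<and>
          set_integrable lborel {0..1} (\<lambda>x. (cmod (fst f e x))\<^sup>2)) \<and>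
     (\<lambda>e. LINT x:{0..1}|lborel. (cmod (fst f e x))\<^sup>2) summable_on UNIV \<and>
     (m > 0 \<longrightarrow> (\<lambda>v. (cmod (snd f v))\<^sup>2) summable_on UNIV)"

definition Hinner :: "real \<Rightarrow> state \<Rightarrow> state \<Rightarrow> complex" where
  "Hinner m f g =
     (\<Sum>\<^sub>\<infinity>e. LINT x:{0..1}|lborel. fst f e x * cnj (fst g e x))
     + of_real m * (\<Sum>\<^sub>\<infinity>v. snd f v * cnj (snd g v))"

definition Hnorm2 :: "real \<Rightarrow> state \<Rightarrow> real" where
  "Hnorm2 m f =
     (\<Sum>\<^sub>\<infinity>e. LINT x:{0..1}|lborel. (cmod (fst f e x))\<^sup>2)
     + m * (\<Sum>\<^sub>\<infinity>v. (cmod (snd f v))\<^sup>2)"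

definition state_diff :: "state \<Rightarrow> state \<Rightarrow> state" where
  "state_diff f g = ((\<lambda>e x. fst f e x - fst g e x), (\<lambda>v. snd f v - snd g v))"

definition lincomb :: "(nat \<Rightarrow> complex) \<Rightarrow> (nat \<Rightarrow> state) \<Rightarrow> nat \<Rightarrow> state" where
  "lincomb c F n = ((\<lambda>e x. \<Sum>i<n. c i * fst (F i) e x), (\<lambda>v. \<Sum>i<n. c i * snd (F i) v))"

text \<open>(u, omega) lies in the domain of the self-adjoint realisation and satisfies
  A (u, omega) = lambda (u, omega)  (for m > 0), resp. u in the domain with A u = lambda u
  and omega the common vertex value (for m = 0).  The outward derivative at the tail (x = 0) is - U1 e 0,
  at the head (x = 1) it is U1 e 1.\<close>

definition is_eigenfunction :: "real \<Rightarrow> real \<Rightarrow> real \<Rightarrow> (real \<Rightarrow> real) \<Rightarrow> real \<Rightarrow> state \<Rightarrow> bool" where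
  "is_eigenfunction a kinv m q0 lam f \<longleftrightarrow>
     (\<exists>U1 U2.
        (\<forall>e. H2_triple (fst f e) (U1 e) (U2 e) \<and> solves_ode a q0 lam (fst f e) (U2 e)) \<and>
        (\<lambda>e. LINT x:{0..1}|lborel.
              (cmod (fst f e x))\<^sup>2 + (cmod (U1 e x))\<^sup>2 + (cmod (U2 e x))\<^sup>2) summable_on UNIV \<and>
        (\<lambda>v. (cmod (snd f v))\<^sup>2) summable_on UNIV \<and>
        (\<forall>e. fst f e 0 - of_real (rho a kinv) * U1 e 0 = snd f (tail e) \<and>
             fst f e 1 + of_real (rho a kinv) * U1 e 1 = snd f (head e)) \<and>
        (\<forall>v. of_real a * ((\<Sum>e\<in>{e. tail e = v}. - U1 e 0) + (\<Sum>e\<in>{e. head e = v}. U1 e 1))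
              = of_real (lam * m) * snd f v))"

definition is_loop_state :: "real \<Rightarrow> real \<Rightarrow> real \<Rightarrow> (real \<Rightarrow> real) \<Rightarrow> real \<Rightarrow> state \<Rightarrow> bool" where
  "is_loop_state a kinv m q0 lam f \<longleftrightarrow>
     is_eigenfunction a kinv m q0 lam f \<and>
     (\<exists>c. \<forall>e. e \<notin> hexagon c \<longrightarrow> (\<forall>x\<in>{0..1}. fst f e x = 0)) \<and>
     (\<forall>v. snd f v = 0)"

definition in_closed_loop_span :: "real \<Rightarrow> real \<Rightarrow> real \<Rightarrow> (real \<Rightarrow> real) \<Rightarrow> real \<Rightarrow> state \<Rightarrow> bool" where
  "in_closed_loop_span a kinv m q0 lam f \<longleftrightarrow>
     (\<forall>\<epsilon>>0. \<exists>n c F. (\<forall>i<n. is_loop_state a kinv m q0 lam (F i)) \<and>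
                      Hnorm2 m (state_diff f (lincomb c F n)) < \<epsilon>)"

end

theory Submission
  imports Defs
begin

lemma H2_cont:
  assumes H: "H2_triple y y1 y2"
  shows "continuous_on {0..1} y" "continuous_on {0..1} y1"
    "\<And>x. x \<in> {0..1} \<Longrightarrow> y1 x = y1 0 + integral {0..x} y2"
    "y2 integrable_on {0..1}"
proof -
  have d: "\<And>x. x \<in> {0..1} \<Longrightarrow> (y has_vector_derivative y1 x) (at x within {0..1})"
    and i: "\<And>x. x \<in> {0..1} \<Longrightarrow> (y2 has_integral (y1 x - y1 0)) {0..x}"
    using H unfolding H2_triple_def by blast+
  show "continuous_on {0..1} y"
    unfolding continuous_on_eq_continuous_within using d has_vector_derivative_continuous by blast
  show eq: "\<And>x. x \<in> {0..1} \<Longrightarrow> y1 x = y1 0 + integral {0..x} y2"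
  proof -
    fix x :: real assume "x \<in> {0..1}"
    then have "integral {0..x} y2 = y1 x - y1 0" using i integral_unique by blast
    then show "y1 x = y1 0 + integral {0..x} y2" by simp
  qed
  show int: "y2 integrable_on {0..1}" using i[of 1] by auto
  have "continuous_on {0..1} (\<lambda>x. y1 0 + integral {0..x} y2)"
    by (intro continuous_intros indefinite_integral_continuous_1 int)
  then show "continuous_on {0..1} y1" by (rule continuous_on_eq) (auto simp: eq[symmetric])
qed

lemma exp_shift1: "exp (- u) * n \<le> (E::real) \<Longrightarrow> n \<le> E * exp u"
proof -
  assume h: "exp (- u) * n \<le> E"
  have "n = exp u * (exp (- u) * n)" by (simp add: exp_minus_inverse mult.assoc[symmetric])
  also have "\<dots> \<le> exp u * E" using h by (intro mult_left_mono) auto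
  finally show ?thesis by (simp add: mult.commute)
qed

lemma exp_shift2: "n \<le> (E::real) * exp u \<Longrightarrow> exp (- u) * n \<le> E"
proof -
  assume h: "n \<le> E * exp u"
  have "exp (- u) * n \<le> exp (- u) * (E * exp u)" using h by (intro mult_left_mono) auto
  also have "\<dots> = E * (exp (- u) * exp u)" by simp
  also have "exp (- u) * exp u = 1" by (simp add: exp_add[symmetric])
  finally show ?thesis by simp
qed

lemma gronwall0:
  fixes N :: "real \<Rightarrow> real"
  assumes cont: "continuous_on {0..1} N" and nn: "\<And>x. x\<in>{0..1} \<Longrightarrow> 0 \<le> N x"
    and C: "C > 0" and bd: "\<And>x. x \<in> {0..1} \<Longrightarrow> N x \<le> C * integral {0..x} N"
  shows "\<And>x. x \<in> {0..1} \<Longrightarrow> N x = 0"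
proof -
  define L where "L = 2 * C"
  have L: "L > 0" using C by (simp add: L_def)
  define w where "w x = exp (- L * x) * N x" for x
  have cw: "continuous_on {0..1} w" unfolding w_def by (intro continuous_intros cont)
  obtain x0 where x0: "x0 \<in> {0..1}" "\<And>y. y \<in> {0..1} \<Longrightarrow> w y \<le> w x0"
    using continuous_attains_sup[OF compact_Icc _ cw] by auto
  define E where "E = w x0"
  have NE: "N t \<le> E * exp (L * t)" if "t \<in> {0..1}" for t
  proof -
    have "w t \<le> E" using x0 that by (simp add: E_def)
    then have "exp (- (L * t)) * N t \<le> E" by (simp add: w_def)
    then show ?thesis by (rule exp_shift1)
  qed
  have key: "w x \<le> E / 2" if x: "x \<in> {0..1}" for x
  proof -
    have der: "((\<lambda>t. E / L * exp (L * t)) has_vector_derivative E * exp (L * t)) (at t within {0..x})" for t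
      unfolding has_real_derivative_iff_has_vector_derivative[symmetric]
      apply (rule derivative_eq_intros refl)+
      using L apply simp
      done
    have hi: "((\<lambda>t. E * exp (L * t)) has_integral (E / L * exp (L * x) - E / L * exp (L * 0))) {0..x}"
      using fundamental_theorem_of_calculus[of 0 x "\<lambda>t. E / L * exp (L * t)" "\<lambda>t. E * exp (L * t)", OF _ der] x
      by simp
    have "integral {0..x} N \<le> integral {0..x} (\<lambda>t. E * exp (L * t))"
    proof (rule integral_le)
      show "N integrable_on {0..x}"
        using x by (intro integrable_continuous_interval continuous_on_subset[OF cont]) auto
      show "(\<lambda>t. E * exp (L * t)) integrable_on {0..x}" using hi by blast
      show "\<And>t. t \<in> {0..x} \<Longrightarrow> N t \<le> E * exp (L * t)" using NE x by auto
    qed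
    also have "\<dots> = E / L * exp (L * x) - E / L" using integral_unique[OF hi] by simp
    finally have "integral {0..x} N \<le> E / L * exp (L * x) - E / L" .
    moreover have "E \<ge> 0" using nn[OF x0(1)] by (simp add: E_def w_def)
    moreover have "E / L \<ge> 0" using L \<open>E \<ge> 0\<close> by simp
    ultimately have I: "integral {0..x} N \<le> E / L * exp (L * x)" by linarith
    have "N x \<le> C * (E / L * exp (L * x))" using bd[OF x] mult_left_mono[OF I, of C] C by linarith
    then have "N x \<le> E / 2 * exp (L * x)" using C by (simp add: L_def)
    then have "exp (- (L * x)) * N x \<le> E / 2" by (rule exp_shift2)
    then show ?thesis by (simp add: w_def)
  qed
  have "E \<le> E / 2" using key[OF x0(1)] by (simp add: E_def)
  then have E0: "E \<le> 0" by simp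
  fix x :: real assume x: "x \<in> {0..1}"
  have "w x \<le> 0" using key[OF x] E0 by simp
  then have "N x \<le> 0" unfolding w_def by (simp add: mult_le_0_iff)
  then show "N x = 0" using nn[OF x] by simp
qed

lemma gronwall1:
  fixes N :: "real \<Rightarrow> real"
  assumes cont: "continuous_on {0..1} N" and nn: "\<And>x. x\<in>{0..1} \<Longrightarrow> 0 \<le> N x"
    and C: "C > 0" and bd: "\<And>x. x \<in> {0..1} \<Longrightarrow> N x \<le> C * integral {x..1} N"
  shows "\<And>x. x \<in> {0..1} \<Longrightarrow> N x = 0"
proof -
  define L where "L = 2 * C"
  have L: "L > 0" using C by (simp add: L_def)
  define w where "w x = exp (- L * (1 - x)) * N x" for x
  have cw: "continuous_on {0..1} w" unfolding w_def by (intro continuous_intros cont)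
  obtain x0 where x0: "x0 \<in> {0..1}" "\<And>y. y \<in> {0..1} \<Longrightarrow> w y \<le> w x0"
    using continuous_attains_sup[OF compact_Icc _ cw] by auto
  define E where "E = w x0"
  have NE: "N t \<le> E * exp (L * (1 - t))" if "t \<in> {0..1}" for t
  proof -
    have "w t \<le> E" using x0 that by (simp add: E_def)
    then have "exp (- (L * (1 - t))) * N t \<le> E" by (simp add: w_def)
    then show ?thesis by (rule exp_shift1)
  qed
  have key: "w x \<le> E / 2" if x: "x \<in> {0..1}" for x
  proof -
    have der: "((\<lambda>t. - E / L * exp (L * (1 - t))) has_vector_derivative E * exp (L * (1 - t))) (at t within {x..1})" for t
      unfolding has_real_derivative_iff_has_vector_derivative[symmetric]
      apply (rule derivative_eq_intros refl)+
      using L apply simp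
      done
    have hi: "((\<lambda>t. E * exp (L * (1 - t))) has_integral (- E / L * exp (L * (1 - 1)) - (- E / L * exp (L * (1 - x))))) {x..1}"
      using fundamental_theorem_of_calculus[of x 1 "\<lambda>t. - E / L * exp (L * (1 - t))" "\<lambda>t. E * exp (L * (1 - t))", OF _ der] x
      by simp
    have "integral {x..1} N \<le> integral {x..1} (\<lambda>t. E * exp (L * (1 - t)))"
    proof (rule integral_le)
      show "N integrable_on {x..1}"
        using x by (intro integrable_continuous_interval continuous_on_subset[OF cont]) auto
      show "(\<lambda>t. E * exp (L * (1 - t))) integrable_on {x..1}" using hi by blast
      show "\<And>t. t \<in> {x..1} \<Longrightarrow> N t \<le> E * exp (L * (1 - t))" using NE x by auto
    qed
    also have "\<dots> = E / L * exp (L * (1 - x)) - E / L" using integral_unique[OF hi] by simp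
    finally have "integral {x..1} N \<le> E / L * exp (L * (1 - x)) - E / L" .
    moreover have "E \<ge> 0" using nn[OF x0(1)] by (simp add: E_def w_def)
    moreover have "E / L \<ge> 0" using L \<open>E \<ge> 0\<close> by simp
    ultimately have I: "integral {x..1} N \<le> E / L * exp (L * (1 - x))" by linarith
    have "N x \<le> C * (E / L * exp (L * (1 - x)))" using bd[OF x] mult_left_mono[OF I, of C] C by linarith
    then have "N x \<le> E / 2 * exp (L * (1 - x))" using C by (simp add: L_def)
    then have "exp (- (L * (1 - x))) * N x \<le> E / 2" by (rule exp_shift2)
    then show ?thesis by (simp add: w_def)
  qed
  have "E \<le> E / 2" using key[OF x0(1)] by (simp add: E_def)
  then have E0: "E \<le> 0" by simp
  fix x :: real assume x: "x \<in> {0..1}"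
  have "w x \<le> 0" using key[OF x] E0 by simp
  then have "N x \<le> 0" unfolding w_def by (simp add: mult_le_0_iff)
  then show "N x = 0" using nn[OF x] by simp
qed

lemma ode_AE_bound:
  assumes a: "a > 0" and qb: "AE x in lborel. x \<in> {0..1} \<longrightarrow> \<bar>q0 x\<bar> \<le> B"
    and so: "solves_ode a q0 lam y y2"
  shows "AE x in lborel. x \<in> {0..1} \<longrightarrow> cmod (y2 x) \<le> ((B + \<bar>lam\<bar>)/a) * cmod (y x)"
  using qb so unfolding solves_ode_def
proof eventually_elim
  case (elim x)
  show ?case
  proof
    assume x: "x \<in> {0..1}"
    have e0: "- of_real a * y2 x + of_real (q0 x) * y x = of_real lam * y x" using elim x by auto
    have e: "of_real a * y2 x = of_real (q0 x - lam) * y x" using e0 by (simp add: algebra_simps)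
    have "a * cmod (y2 x) = \<bar>q0 x - lam\<bar> * cmod (y x)"
      using arg_cong[OF e, of cmod] a by (simp add: norm_mult del: of_real_diff)
    also have "\<dots> \<le> (B + \<bar>lam\<bar>) * cmod (y x)" using elim x by (intro mult_right_mono) auto
    finally show "cmod (y2 x) \<le> ((B + \<bar>lam\<bar>)/a) * cmod (y x)" using a by (simp add: field_simps)
  qed
qed

lemma spike_bound:
  assumes H: "H2_triple y y1 y2" and K: "K \<ge> 0"
    and AEb: "AE x in lborel. x \<in> {0..1} \<longrightarrow> cmod (y2 x) \<le> K * cmod (y x)"
  obtains z where "\<And>x. x \<in> {0..1} \<Longrightarrow> (z has_integral (y1 x - y1 0)) {0..x}"
    "\<And>x. x \<in> {0..1} \<Longrightarrow> cmod (z x) \<le> K * cmod (y x)"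
proof -
  from AEb obtain N where N: "{x \<in> space lborel. \<not> (x \<in> {0..1} \<longrightarrow> cmod (y2 x) \<le> K * cmod (y x))} \<subseteq> N"
     "N \<in> null_sets lborel"
    by (auto elim!: AE_E simp: null_sets_def)
  have negN: "negligible N" using N(2) by (simp add: negligible_iff_null_sets null_sets_completionI)
  define z where "z x = (if x \<in> N then 0 else y2 x)" for x
  have "(z has_integral (y1 x - y1 0)) {0..x}" if "x \<in> {0..1}" for x
    using has_integral_spike[OF negN, of "{0..x}" z y2] H that unfolding H2_triple_def z_def by auto
  moreover have "cmod (z x) \<le> K * cmod (y x)" if "x \<in> {0..1}" for x
  proof (cases "x \<in> N")
    case True
    show ?thesis using True K unfolding z_def by auto
  next
    case False
    then show ?thesis using N(1) that unfolding z_def by auto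
  qed
  ultimately show ?thesis using that by blast
qed


lemma uniq0:
  assumes H: "H2_triple y y1 y2" and K: "K \<ge> 0"
    and AEb: "AE x in lborel. x \<in> {0..1} \<longrightarrow> cmod (y2 x) \<le> K * cmod (y x)"
    and y0: "y 0 = 0" "y1 0 = 0"
  shows "\<And>x. x \<in> {0..1} \<Longrightarrow> y x = 0 \<and> y1 x = 0"
proof -
  obtain z where zi: "\<And>x. x \<in> {0..1} \<Longrightarrow> (z has_integral (y1 x - y1 0)) {0..x}"
    and zb: "\<And>x. x \<in> {0..1} \<Longrightarrow> cmod (z x) \<le> K * cmod (y x)"
    using spike_bound[OF H K AEb] by blast
  have cy: "continuous_on {0..1} y" and cy1: "continuous_on {0..1} y1" using H2_cont[OF H] by auto
  have d: "\<And>x. x \<in> {0..1} \<Longrightarrow> (y has_vector_derivative y1 x) (at x within {0..1})"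
    using H unfolding H2_triple_def by blast
  define N where "N x = cmod (y x) + cmod (y1 x)" for x
  have cN: "continuous_on {0..1} N" unfolding N_def by (intro continuous_intros cy cy1)
  have bd: "N x \<le> (K+1) * integral {0..x} N" if x: "x \<in> {0..1}" for x
  proof -
    have sub: "{0..x} \<subseteq> {0..1}" using x by auto
    have fy: "(y1 has_integral (y x - y 0)) {0..x}"
    proof (rule fundamental_theorem_of_calculus)
      show "0 \<le> x" using x by simp
      fix t assume "t \<in> {0..x}"
      then show "(y has_vector_derivative y1 t) (at t within {0..x})"
        using d sub has_vector_derivative_within_subset by blast
    qed
    have iy1: "y1 integrable_on {0..x}" using fy by blast
    have icy1: "(\<lambda>t. cmod (y1 t)) integrable_on {0..x}"
      by (intro integrable_continuous_interval continuous_intros continuous_on_subset[OF cy1 sub])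
    have icy: "(\<lambda>t. K * cmod (y t)) integrable_on {0..x}"
      by (intro integrable_continuous_interval continuous_intros continuous_on_subset[OF cy sub])
    have "cmod (y x) = cmod (integral {0..x} y1)" using integral_unique[OF fy] y0 by simp
    also have "\<dots> \<le> integral {0..x} (\<lambda>t. cmod (y1 t))" by (rule integral_norm_bound_integral[OF iy1 icy1]) simp
    finally have A: "cmod (y x) \<le> integral {0..x} (\<lambda>t. cmod (y1 t))" .
    have "cmod (y1 x) = cmod (integral {0..x} z)" using integral_unique[OF zi[OF x]] y0 by simp
    also have "\<dots> \<le> integral {0..x} (\<lambda>t. K * cmod (y t))"
      by (rule integral_norm_bound_integral) (use zi[OF x] icy zb sub in auto)
    finally have B: "cmod (y1 x) \<le> integral {0..x} (\<lambda>t. K * cmod (y t))" .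
    have "integral {0..x} (\<lambda>t. cmod (y1 t)) + integral {0..x} (\<lambda>t. K * cmod (y t))
        = integral {0..x} (\<lambda>t. cmod (y1 t) + K * cmod (y t))"
      by (rule integral_add[symmetric, OF icy1 icy])
    also have "\<dots> \<le> integral {0..x} (\<lambda>t. (K+1) * N t)"
    proof (rule integral_le)
      show "(\<lambda>t. cmod (y1 t) + K * cmod (y t)) integrable_on {0..x}" using icy1 icy by (rule integrable_add)
      show "(\<lambda>t. (K+1) * N t) integrable_on {0..x}"
        by (intro integrable_continuous_interval continuous_intros continuous_on_subset[OF cN sub])
      fix t show "cmod (y1 t) + K * cmod (y t) \<le> (K+1) * N t"
        using K by (simp add: N_def algebra_simps)
    qed
    also have "\<dots> = (K+1) * integral {0..x} N" by (rule integral_mult_right)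
    finally show ?thesis using A B by (simp add: N_def)
  qed
  have N0: "N x = 0" if "x \<in> {0..1}" for x
    by (rule gronwall0[OF cN _ _ bd that]) (use K in \<open>auto simp: N_def\<close>)
  fix x :: real assume "x \<in> {0..1}"
  then show "y x = 0 \<and> y1 x = 0" using N0[of x] by (simp add: N_def add_nonneg_eq_0_iff)
qed

lemma uniq1:
  assumes H: "H2_triple y y1 y2" and K: "K \<ge> 0"
    and AEb: "AE x in lborel. x \<in> {0..1} \<longrightarrow> cmod (y2 x) \<le> K * cmod (y x)"
    and y0: "y 1 = 0" "y1 1 = 0"
  shows "\<And>x. x \<in> {0..1} \<Longrightarrow> y x = 0 \<and> y1 x = 0"
proof -
  obtain z where zi: "\<And>x. x \<in> {0..1} \<Longrightarrow> (z has_integral (y1 x - y1 0)) {0..x}"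
    and zb: "\<And>x. x \<in> {0..1} \<Longrightarrow> cmod (z x) \<le> K * cmod (y x)"
    using spike_bound[OF H K AEb] by blast
  have cy: "continuous_on {0..1} y" and cy1: "continuous_on {0..1} y1" using H2_cont[OF H] by auto
  have d: "\<And>x. x \<in> {0..1} \<Longrightarrow> (y has_vector_derivative y1 x) (at x within {0..1})"
    using H unfolding H2_triple_def by blast
  define N where "N x = cmod (y x) + cmod (y1 x)" for x
  have cN: "continuous_on {0..1} N" unfolding N_def by (intro continuous_intros cy cy1)
  have bd: "N x \<le> (K+1) * integral {x..1} N" if x: "x \<in> {0..1}" for x
  proof -
    have sub: "{x..1} \<subseteq> {0..1}" using x by auto
    have fy: "(y1 has_integral (y 1 - y x)) {x..1}"
    proof (rule fundamental_theorem_of_calculus)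
      show "x \<le> 1" using x by simp
      fix t assume "t \<in> {x..1}"
      then show "(y has_vector_derivative y1 t) (at t within {x..1})"
        using d sub has_vector_derivative_within_subset by blast
    qed
    have iy1: "y1 integrable_on {x..1}" using fy by blast
    have icy1: "(\<lambda>t. cmod (y1 t)) integrable_on {x..1}"
      by (intro integrable_continuous_interval continuous_intros continuous_on_subset[OF cy1 sub])
    have icy: "(\<lambda>t. K * cmod (y t)) integrable_on {x..1}"
      by (intro integrable_continuous_interval continuous_intros continuous_on_subset[OF cy sub])
    have "cmod (y x) = cmod (integral {x..1} y1)" using integral_unique[OF fy] y0 by simp
    also have "\<dots> \<le> integral {x..1} (\<lambda>t. cmod (y1 t))" by (rule integral_norm_bound_integral[OF iy1 icy1]) simp
    finally have A: "cmod (y x) \<le> integral {x..1} (\<lambda>t. cmod (y1 t))" .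
    have z01: "z integrable_on {0..1}" using zi[of 1] by auto
    have zx1: "z integrable_on {x..1}" by (rule integrable_subinterval_real[OF z01 sub])
    have "integral {0..x} z + integral {x..1} z = integral {0..1} z"
      using x by (intro Henstock_Kurzweil_Integration.integral_combine z01) auto
    then have "integral {x..1} z = y1 1 - y1 x"
      using integral_unique[OF zi[OF x]] integral_unique[OF zi[of 1]] by (simp add: algebra_simps)
    then have "cmod (y1 x) = cmod (integral {x..1} z)" using y0 by simp
    also have "\<dots> \<le> integral {x..1} (\<lambda>t. K * cmod (y t))"
      by (rule integral_norm_bound_integral) (use zx1 icy zb sub in auto)
    finally have B: "cmod (y1 x) \<le> integral {x..1} (\<lambda>t. K * cmod (y t))" .
    have "integral {x..1} (\<lambda>t. cmod (y1 t)) + integral {x..1} (\<lambda>t. K * cmod (y t))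
        = integral {x..1} (\<lambda>t. cmod (y1 t) + K * cmod (y t))"
      by (rule integral_add[symmetric, OF icy1 icy])
    also have "\<dots> \<le> integral {x..1} (\<lambda>t. (K+1) * N t)"
    proof (rule integral_le)
      show "(\<lambda>t. cmod (y1 t) + K * cmod (y t)) integrable_on {x..1}" using icy1 icy by (rule integrable_add)
      show "(\<lambda>t. (K+1) * N t) integrable_on {x..1}"
        by (intro integrable_continuous_interval continuous_intros continuous_on_subset[OF cN sub])
      fix t show "cmod (y1 t) + K * cmod (y t) \<le> (K+1) * N t"
        using K by (simp add: N_def algebra_simps)
    qed
    also have "\<dots> = (K+1) * integral {x..1} N" by (rule integral_mult_right)
    finally show ?thesis using A B by (simp add: N_def)
  qed
  have N0: "N x = 0" if "x \<in> {0..1}" for x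
    by (rule gronwall1[OF cN _ _ bd that]) (use K in \<open>auto simp: N_def\<close>)
  fix x :: real assume "x \<in> {0..1}"
  then show "y x = 0 \<and> y1 x = 0" using N0[of x] by (simp add: N_def add_nonneg_eq_0_iff)
qed

lemma sbm_lin:
  assumes "set_borel_measurable lborel {0..1} (f :: real \<Rightarrow> complex)" "set_borel_measurable lborel {0..1} g"
  shows "set_borel_measurable lborel {0..1} (\<lambda>x. c * f x + d * g x)"
proof -
  have "(\<lambda>x. c * (indicator {0..1} x *\<^sub>R f x) + d * (indicator {0..1} x *\<^sub>R g x)) \<in> borel_measurable lborel"
    using assms unfolding set_borel_measurable_def by measurable
  moreover have "(\<lambda>x. c * (indicator {0..1} x *\<^sub>R f x) + d * (indicator {0..1} x *\<^sub>R g x))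
      = (\<lambda>x. indicator {0..1} x *\<^sub>R (c * f x + d * g x))"
    by (auto simp: indicator_def fun_eq_iff)
  ultimately show ?thesis unfolding set_borel_measurable_def by simp
qed

lemma sbm_sq:
  assumes "set_borel_measurable lborel {0..1} (f :: real \<Rightarrow> complex)"
  shows "set_borel_measurable lborel {0..1} (\<lambda>x. (cmod (f x))\<^sup>2)"
proof -
  have "(\<lambda>x. (cmod (indicator {0..1} x *\<^sub>R f x))\<^sup>2) \<in> borel_measurable lborel"
    using assms unfolding set_borel_measurable_def by measurable
  moreover have "(\<lambda>x. (cmod (indicator {0..1} x *\<^sub>R f x))\<^sup>2) = (\<lambda>x. indicator {0..1} x *\<^sub>R (cmod (f x))\<^sup>2)"
    by (auto simp: indicator_def fun_eq_iff)
  ultimately show ?thesis unfolding set_borel_measurable_def by simp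
qed

lemma sq_sum_le: "((x::real) + y)\<^sup>2 \<le> 2 * x\<^sup>2 + 2 * y\<^sup>2"
proof -
  have "(x + y)\<^sup>2 = 2 * x\<^sup>2 + 2 * y\<^sup>2 - (x - y)\<^sup>2" by (simp add: power2_eq_square algebra_simps)
  moreover have "(x - y)\<^sup>2 \<ge> 0" by simp
  ultimately show ?thesis by linarith
qed

lemma sq_lin_bound: "(cmod (c * a + d * b))\<^sup>2 \<le> 2 * (cmod c)\<^sup>2 * (cmod a)\<^sup>2 + 2 * (cmod d)\<^sup>2 * (cmod b)\<^sup>2"
proof -
  have "cmod (c * a + d * b) \<le> cmod c * cmod a + cmod d * cmod b"
    by (metis norm_mult norm_triangle_ineq)
  then have "(cmod (c * a + d * b))\<^sup>2 \<le> (cmod c * cmod a + cmod d * cmod b)\<^sup>2"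
    by (simp add: power_mono)
  also have "\<dots> \<le> 2 * (cmod c)\<^sup>2 * (cmod a)\<^sup>2 + 2 * (cmod d)\<^sup>2 * (cmod b)\<^sup>2"
    using sq_sum_le[of "cmod c * cmod a" "cmod d * cmod b"] by (simp add: power_mult_distrib)
  finally show ?thesis .
qed

lemma sqint_lin:
  assumes "set_borel_measurable lborel {0..1} (f :: real \<Rightarrow> complex)" "set_borel_measurable lborel {0..1} g"
    "set_integrable lborel {0..1} (\<lambda>x. (cmod (f x))\<^sup>2)" "set_integrable lborel {0..1} (\<lambda>x. (cmod (g x))\<^sup>2)"
  shows "set_integrable lborel {0..1} (\<lambda>x. (cmod (c * f x + d * g x))\<^sup>2)"
proof (rule set_integrable_bound)
  show "set_integrable lborel {0..1} (\<lambda>x. 2 * (cmod c)\<^sup>2 * (cmod (f x))\<^sup>2 + 2 * (cmod d)\<^sup>2 * (cmod (g x))\<^sup>2)"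
    using assms(3,4) by (intro set_integral_add set_integrable_mult_right) auto
  show "set_borel_measurable lborel {0..1} (\<lambda>x. (cmod (c * f x + d * g x))\<^sup>2)"
    by (intro sbm_sq sbm_lin assms)
  show "AE x\<in>{0..1} in lborel. norm ((cmod (c * f x + d * g x))\<^sup>2)
      \<le> norm (2 * (cmod c)\<^sup>2 * (cmod (f x))\<^sup>2 + 2 * (cmod d)\<^sup>2 * (cmod (g x))\<^sup>2)"
    using sq_lin_bound[of c "f _" d "g _"] by (auto intro!: AE_I2 order_trans[OF _ abs_ge_self])
qed

lemma H2_lin:
  assumes H: "H2_triple y y1 y2" and G: "H2_triple z z1 z2"
  shows "H2_triple (\<lambda>x. c * y x + d * z x) (\<lambda>x. c * y1 x + d * z1 x) (\<lambda>x. c * y2 x + d * z2 x)"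
  unfolding H2_triple_def
proof (intro conjI ballI)
  fix x :: real assume x: "x \<in> {0..1}"
  show "((\<lambda>x. c * y x + d * z x) has_vector_derivative c * y1 x + d * z1 x) (at x within {0..1})"
    using H G x unfolding H2_triple_def by (auto intro!: derivative_intros)
  have "((\<lambda>x. c * y2 x + d * z2 x) has_integral (c * (y1 x - y1 0) + d * (z1 x - z1 0))) {0..x}"
    using H G x unfolding H2_triple_def by (auto intro!: has_integral_add has_integral_mult_right)
  then show "((\<lambda>x. c * y2 x + d * z2 x) has_integral (c * y1 x + d * z1 x - (c * y1 0 + d * z1 0))) {0..x}"
    by (simp add: algebra_simps)
next
  show "set_borel_measurable lborel {0..1} (\<lambda>x. c * y2 x + d * z2 x)"
    using H G unfolding H2_triple_def by (intro sbm_lin) auto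
  show "set_integrable lborel {0..1} (\<lambda>x. (cmod (c * y2 x + d * z2 x))\<^sup>2)"
    using H G unfolding H2_triple_def by (intro sqint_lin) auto
qed

lemma ode_lin:
  assumes "solves_ode a q0 lam y y2" "solves_ode a q0 lam z z2"
  shows "solves_ode a q0 lam (\<lambda>x. c * y x + d * z x) (\<lambda>x. c * y2 x + d * z2 x)"
  using assms unfolding solves_ode_def
proof eventually_elim
  case (elim x)
  then show ?case by (auto simp: algebra_simps)
qed

lemma H2_scale:
  assumes "H2_triple y y1 y2"
  shows "H2_triple (\<lambda>x. c * y x) (\<lambda>x. c * y1 x) (\<lambda>x. c * y2 x)"
  using H2_lin[OF assms assms, of c 0] by simp

lemma ode_scale:
  assumes "solves_ode a q0 lam y y2"
  shows "solves_ode a q0 lam (\<lambda>x. c * y x) (\<lambda>x. c * y2 x)"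
  using ode_lin[OF assms assms, of c 0] by simp

lemma tail_set_T: "{e. tail e = ((p,q),True)} = {((p,q),D0),((p,q),D1),((p,q),D2)}"
  by (auto simp: tail_def) (metis dir.exhaust prod.collapse)

lemma tail_set_F: "{e. tail e = (c,False)} = {}"
  by (auto simp: tail_def)

lemma head_set_T: "{e. head e = (c,True)} = {}"
  by (auto simp: head_def)

lemma head_set_F: "{e. head e = ((p,q),False)} = {((p,q),D0),((p+1,q),D1),((p,q+1),D2)}"
proof -
  have "e \<in> {((p,q),D0),((p+1,q),D1),((p,q+1),D2)}" if "head e = ((p,q),False)" for e
  proof -
    obtain i j d where e: "e = ((i,j),d)" by (metis prod.collapse)
    show ?thesis using that unfolding e head_def by (cases d) auto
  qed
  moreover have "head e = ((p,q),False)" if "e \<in> {((p,q),D0),((p+1,q),D1),((p,q+1),D2)}" for e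
    using that by (auto simp: head_def)
  ultimately show ?thesis by blast
qed

definition divfree :: "(edge \<Rightarrow> complex) \<Rightarrow> bool" where
  "divfree c \<longleftrightarrow> (\<forall>p q. c ((p,q),D0) + c ((p,q),D1) + c ((p,q),D2) = 0) \<and>
                  (\<forall>p q. c ((p,q),D0) + c ((p+1,q),D1) + c ((p,q+1),D2) = 0)"

locale setting =
  fixes a kinv m lam :: real and q0 :: "real \<Rightarrow> real" and B :: real
    and phi phi1 phi2 :: "real \<Rightarrow> complex"
  assumes a_pos: "a > 0" and m_nn: "m \<ge> 0"
    and qb: "AE x in lborel. x \<in> {0..1} \<longrightarrow> \<bar>q0 x\<bar> \<le> B"
    and phiH: "H2_triple phi phi1 phi2" and phiS: "solves_ode a q0 lam phi phi2"
    and phiL: "phi 0 - of_real (rho a kinv) * phi1 0 = 0"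
    and phiR: "phi 1 + of_real (rho a kinv) * phi1 1 = 0"
    and phinz: "\<exists>x\<in>{0..1}. phi x \<noteq> 0"
begin

definition K where "K = (\<bar>B\<bar> + \<bar>lam\<bar>) / a"

lemma K_nn: "K \<ge> 0" using a_pos by (simp add: K_def)

lemma sol_bound:
  assumes "solves_ode a q0 lam y y2"
  shows "AE x in lborel. x \<in> {0..1} \<longrightarrow> cmod (y2 x) \<le> K * cmod (y x)"
proof -
  have "AE x in lborel. x \<in> {0..1} \<longrightarrow> \<bar>q0 x\<bar> \<le> \<bar>B\<bar>" using qb by eventually_elim auto
  from ode_AE_bound[OF a_pos this assms] show ?thesis by (simp add: K_def)
qed

lemma phi1_0: "phi1 0 \<noteq> 0"
proof
  assume h: "phi1 0 = 0"
  then have "phi 0 = 0" using phiL by simp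
  from uniq0[OF phiH K_nn sol_bound[OF phiS] this h] phinz show False by blast
qed

lemma phi1_1: "phi1 1 \<noteq> 0"
proof
  assume h: "phi1 1 = 0"
  then have "phi 1 = 0" using phiR by simp
  from uniq1[OF phiH K_nn sol_bound[OF phiS] this h] phinz show False by blast
qed

lemma bc0:
  assumes H: "H2_triple w w1 w2" and S: "solves_ode a q0 lam w w2"
    and L: "w 0 - of_real (rho a kinv) * w1 0 = 0" and x: "x \<in> {0..1}"
  shows "w x = (w1 0 / phi1 0) * phi x \<and> w1 x = (w1 0 / phi1 0) * phi1 x"
proof -
  define k where "k = w1 0 / phi1 0"
  have H': "H2_triple (\<lambda>x. 1 * w x + (- k) * phi x) (\<lambda>x. 1 * w1 x + (- k) * phi1 x) (\<lambda>x. 1 * w2 x + (- k) * phi2 x)"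
    by (rule H2_lin[OF H phiH])
  have S': "solves_ode a q0 lam (\<lambda>x. 1 * w x + (- k) * phi x) (\<lambda>x. 1 * w2 x + (- k) * phi2 x)"
    by (rule ode_lin[OF S phiS])
  have z1: "1 * w1 0 + (- k) * phi1 0 = 0" using phi1_0 by (simp add: k_def)
  have "w 0 = of_real (rho a kinv) * w1 0" "phi 0 = of_real (rho a kinv) * phi1 0" using L phiL by simp_all
  then have z0: "1 * w 0 + (- k) * phi 0 = 0" using z1 by (simp add: algebra_simps)
  from uniq0[OF H' K_nn sol_bound[OF S'] z0 z1 x] show ?thesis by (simp add: k_def)
qed

lemma bc1:
  assumes H: "H2_triple w w1 w2" and S: "solves_ode a q0 lam w w2"
    and R: "w 1 + of_real (rho a kinv) * w1 1 = 0" and x: "x \<in> {0..1}"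
  shows "w x = (w1 1 / phi1 1) * phi x \<and> w1 x = (w1 1 / phi1 1) * phi1 x"
proof -
  define k where "k = w1 1 / phi1 1"
  have H': "H2_triple (\<lambda>x. 1 * w x + (- k) * phi x) (\<lambda>x. 1 * w1 x + (- k) * phi1 x) (\<lambda>x. 1 * w2 x + (- k) * phi2 x)"
    by (rule H2_lin[OF H phiH])
  have S': "solves_ode a q0 lam (\<lambda>x. 1 * w x + (- k) * phi x) (\<lambda>x. 1 * w2 x + (- k) * phi2 x)"
    by (rule ode_lin[OF S phiS])
  have z1: "1 * w1 1 + (- k) * phi1 1 = 0" using phi1_1 by (simp add: k_def)
  have "w 1 = - of_real (rho a kinv) * w1 1" "phi 1 = - of_real (rho a kinv) * phi1 1"
    using R phiR by (simp_all add: eq_neg_iff_add_eq_0)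
  then have z0: "1 * w 1 + (- k) * phi 1 = 0" using z1 by (simp add: algebra_simps)
  from uniq1[OF H' K_nn sol_bound[OF S'] z0 z1 x] show ?thesis by (simp add: k_def)
qed


lemma one01: "(1::real) \<in> {0..1}" and zero01: "(0::real) \<in> {0..1}" by auto

lemma phi_cont: "continuous_on {0..1} phi" "continuous_on {0..1} phi1"
  using H2_cont[OF phiH] by auto

lemma sq_int_cont:
  assumes "continuous_on {0..1} (g :: real \<Rightarrow> complex)"
  shows "set_integrable lborel {0..1} (\<lambda>x. (cmod (g x))\<^sup>2)"
  by (rule borel_integrable_atLeastAtMost') (intro continuous_intros assms)

definition P where "P = (LINT x:{0..1}|lborel. (cmod (phi x))\<^sup>2)"

lemma P_pos: "P > 0"
proof -
  have si: "set_integrable lborel {0..1} (\<lambda>x. (cmod (phi x))\<^sup>2)" by (rule sq_int_cont[OF phi_cont(1)])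
  have eq: "P = integral {0..1} (\<lambda>x. (cmod (phi x))\<^sup>2)"
    unfolding P_def by (rule set_borel_integral_eq_integral(2)[OF si])
  have hi: "((\<lambda>x. (cmod (phi x))\<^sup>2) has_integral P) {0..1}"
    using set_borel_integral_eq_integral(1)[OF si] eq by (simp add: has_integral_integral)
  have "P \<ge> 0" unfolding eq by (rule integral_nonneg) (use set_borel_integral_eq_integral(1)[OF si] in auto)
  moreover have "P \<noteq> 0"
  proof
    assume P0: "P = 0"
    obtain x where x: "x \<in> {0..1}" "phi x \<noteq> 0" using phinz by blast
    have "(cmod (phi x))\<^sup>2 = 0"
    proof (rule has_integral_0_cbox_imp_0[of 0 1 "\<lambda>x. (cmod (phi x))\<^sup>2"])
      show "continuous_on (cbox 0 1) (\<lambda>x. (cmod (phi x))\<^sup>2)"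
        unfolding box_real by (intro continuous_intros phi_cont)
      show "((\<lambda>x. (cmod (phi x))\<^sup>2) has_integral 0) (cbox 0 1)" using hi P0 by (simp add: box_real)
      show "box 0 (1::real) \<noteq> {}" by (simp add: box_real)
      show "x \<in> cbox 0 1" using x by (simp add: box_real)
    qed auto
    then show False using x by simp
  qed
  ultimately show ?thesis by simp
qed

lemma eig_struct:
  assumes E: "is_eigenfunction a kinv m q0 lam f"
  shows "(\<forall>v. snd f v = 0) \<and> (\<exists>c. (\<forall>e. \<forall>x\<in>{0..1}. fst f e x = c e * phi x) \<and> divfree c \<and>
           (\<lambda>e. (cmod (c e))\<^sup>2) summable_on UNIV)"
proof -
  obtain U1 U2 where HS: "\<And>e. H2_triple (fst f e) (U1 e) (U2 e)" "\<And>e. solves_ode a q0 lam (fst f e) (U2 e)"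
    and summ: "(\<lambda>e. LINT x:{0..1}|lborel. (cmod (fst f e x))\<^sup>2 + (cmod (U1 e x))\<^sup>2 + (cmod (U2 e x))\<^sup>2) summable_on UNIV"
    and wsum: "(\<lambda>v. (cmod (snd f v))\<^sup>2) summable_on UNIV"
    and BL: "\<And>e. fst f e 0 - of_real (rho a kinv) * U1 e 0 = snd f (tail e)"
    and BR: "\<And>e. fst f e 1 + of_real (rho a kinv) * U1 e 1 = snd f (head e)"
    and KC: "\<And>v. of_real a * ((\<Sum>e\<in>{e. tail e = v}. - U1 e 0) + (\<Sum>e\<in>{e. head e = v}. U1 e 1))
                 = of_real (lam * m) * snd f v"
    using E unfolding is_eigenfunction_def by blast
  define \<omega> where "\<omega> = snd f"
  define r :: complex where "r = of_real (rho a kinv)"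
  have cross: "\<omega> (tail e') * \<omega> (head e) = \<omega> (tail e) * \<omega> (head e')" for e e'
  proof -
    define al where "al = \<omega> (tail e)"
    define al' where "al' = \<omega> (tail e')"
    have H: "H2_triple (\<lambda>x. al' * fst f e x + (- al) * fst f e' x) (\<lambda>x. al' * U1 e x + (- al) * U1 e' x)
        (\<lambda>x. al' * U2 e x + (- al) * U2 e' x)" by (rule H2_lin[OF HS(1) HS(1)])
    have S: "solves_ode a q0 lam (\<lambda>x. al' * fst f e x + (- al) * fst f e' x) (\<lambda>x. al' * U2 e x + (- al) * U2 e' x)"
      by (rule ode_lin[OF HS(2) HS(2)])
    have L: "(al' * fst f e 0 + (- al) * fst f e' 0) - of_real (rho a kinv) * (al' * U1 e 0 + (- al) * U1 e' 0) = 0"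
    proof -
      have "(al' * fst f e 0 + (- al) * fst f e' 0) - r * (al' * U1 e 0 + (- al) * U1 e' 0)
          = al' * (fst f e 0 - r * U1 e 0) - al * (fst f e' 0 - r * U1 e' 0)" by (simp add: algebra_simps)
      also have "\<dots> = 0" using BL[of e] BL[of e'] by (simp add: al_def al'_def \<omega>_def r_def)
      finally show ?thesis by (simp add: r_def)
    qed
    obtain k where k: "al' * fst f e 1 + (- al) * fst f e' 1 = k * phi 1" "al' * U1 e 1 + (- al) * U1 e' 1 = k * phi1 1"
      using bc0[OF H S L one01] by blast
    have "al' * (fst f e 1 + r * U1 e 1) - al * (fst f e' 1 + r * U1 e' 1)
        = (al' * fst f e 1 + (- al) * fst f e' 1) + r * (al' * U1 e 1 + (- al) * U1 e' 1)" by (simp add: algebra_simps)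
    also have "\<dots> = k * (phi 1 + r * phi1 1)" unfolding k by (simp add: algebra_simps)
    also have "\<dots> = 0" using phiR by (simp add: r_def)
    finally have "al' * \<omega> (head e) - al * \<omega> (head e') = 0" using BR[of e] BR[of e'] by (simp add: \<omega>_def r_def)
    then show ?thesis by (simp add: al_def al'_def)
  qed
  have bz: "\<omega> (tail e) = 0" if h: "\<omega> (head e) = 0" for e
  proof -
    have R: "fst f e 1 + of_real (rho a kinv) * U1 e 1 = 0" using BR[of e] h by (simp add: \<omega>_def)
    obtain k where k: "fst f e 0 = k * phi 0" "U1 e 0 = k * phi1 0" using bc1[OF HS(1) HS(2) R zero01] by blast
    have "\<omega> (tail e) = k * (phi 0 - of_real (rho a kinv) * phi1 0)" using BL[of e] k by (simp add: \<omega>_def algebra_simps)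
    then show ?thesis using phiL by simp
  qed
  have stepA: "\<omega> ((p,q),True) = \<omega> ((p+1,q),True)" for p q
  proof -
    define e1 where "e1 = ((p,q),D0)"
    define e2 where "e2 = ((p+1,q),D1)"
    have t1: "tail e1 = ((p,q),True)" and h1: "head e1 = ((p,q),False)"
      and t2: "tail e2 = ((p+1,q),True)" and h2: "head e2 = ((p,q),False)"
      by (simp_all add: e1_def e2_def tail_def head_def)
    show ?thesis
    proof (cases "\<omega> ((p,q),False) = 0")
      case True
      then show ?thesis using bz[of e1] bz[of e2] t1 h1 t2 h2 by simp
    next
      case False
      then show ?thesis using cross[of e1 e2] t1 h1 t2 h2 by simp
    qed
  qed
  have Aconst: "\<omega> ((p + int n, q),True) = \<omega> ((p,q),True)" for p q n
  proof (induction n)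
    case 0 then show ?case by simp
  next
    case (Suc n)
    have "\<omega> ((p + int (Suc n), q),True) = \<omega> ((p + int n + 1, q),True)" by (simp add: algebra_simps)
    also have "\<dots> = \<omega> ((p + int n, q),True)" using stepA[of "p + int n" q] by simp
    finally show ?case using Suc by simp
  qed
  have A0: "\<omega> ((p,q),True) = 0" for p q
  proof (rule ccontr)
    assume ne: "\<omega> ((p,q),True) \<noteq> 0"
    define g where "g = (\<lambda>n::nat. ((p + int n, q), True))"
    have inj: "inj_on g UNIV" by (auto simp: inj_on_def g_def)
    have "(\<lambda>v. (cmod (\<omega> v))\<^sup>2) summable_on range g"
      using summable_on_subset_banach[OF wsum] by (simp add: \<omega>_def)
    then have "((\<lambda>v. (cmod (\<omega> v))\<^sup>2) \<circ> g) summable_on UNIV" using summable_on_reindex[OF inj, of "\<lambda>v. (cmod (\<omega> v))\<^sup>2"] by blast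
    moreover have "((\<lambda>v. (cmod (\<omega> v))\<^sup>2) \<circ> g) = (\<lambda>_. (cmod (\<omega> ((p,q),True)))\<^sup>2)"
      using Aconst by (auto simp: g_def fun_eq_iff)
    ultimately show False using infsum_diverge_constant[of "UNIV::nat set" "(cmod (\<omega> ((p,q),True)))\<^sup>2"] ne by auto
  qed
  have B0: "\<omega> ((p,q),False) = 0" for p q
  proof -
    define e where "e = ((p,q),D0)"
    have t: "tail e = ((p,q),True)" and h: "head e = ((p,q),False)" by (simp_all add: e_def tail_def head_def)
    have L: "fst f e 0 - of_real (rho a kinv) * U1 e 0 = 0" using BL[of e] A0[of p q] t by (simp add: \<omega>_def)
    obtain k where k: "fst f e 1 = k * phi 1" "U1 e 1 = k * phi1 1" using bc0[OF HS(1) HS(2) L one01] by blast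
    have "\<omega> (head e) = k * (phi 1 + of_real (rho a kinv) * phi1 1)" using BR[of e] k by (simp add: \<omega>_def algebra_simps)
    then show ?thesis using phiR h by simp
  qed
  have w0: "\<omega> v = 0" for v
  proof -
    obtain p q b where v: "v = ((p,q),b)" by (metis prod.collapse)
    show ?thesis unfolding v by (cases b) (simp_all add: A0 B0)
  qed
  define c where "c e = U1 e 0 / phi1 0" for e
  have uc: "fst f e x = c e * phi x \<and> U1 e x = c e * phi1 x" if "x \<in> {0..1}" for e x
  proof -
    have L: "fst f e 0 - of_real (rho a kinv) * U1 e 0 = 0" using BL[of e] w0 by (simp add: \<omega>_def)
    show ?thesis using bc0[OF HS(1) HS(2) L that] by (simp add: c_def)
  qed
  have dA: "c ((p,q),D0) + c ((p,q),D1) + c ((p,q),D2) = 0" for p q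
  proof -
    have "of_real a * ((\<Sum>e\<in>{((p,q),D0),((p,q),D1),((p,q),D2)}. - U1 e 0)) = 0"
      using KC[of "((p,q),True)"] w0 by (simp add: tail_set_T head_set_T \<omega>_def)
    then have "of_real a * (- phi1 0 * (c ((p,q),D0) + c ((p,q),D1) + c ((p,q),D2))) = 0"
      using uc[of 0] by (simp add: algebra_simps)
    then show ?thesis using a_pos phi1_0 by simp
  qed
  have dB: "c ((p,q),D0) + c ((p+1,q),D1) + c ((p,q+1),D2) = 0" for p q
  proof -
    have "of_real a * ((\<Sum>e\<in>{((p,q),D0),((p+1,q),D1),((p,q+1),D2)}. U1 e 1)) = 0"
      using KC[of "((p,q),False)"] w0 by (simp add: tail_set_F head_set_F \<omega>_def)
    then have "of_real a * (phi1 1 * (c ((p,q),D0) + c ((p+1,q),D1) + c ((p,q+1),D2))) = 0"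
      using uc[of 1] by (simp add: algebra_simps)
    then show ?thesis using a_pos phi1_1 by simp
  qed
  have sq: "(cmod (c e))\<^sup>2 * P \<le> (LINT x:{0..1}|lborel. (cmod (fst f e x))\<^sup>2 + (cmod (U1 e x))\<^sup>2 + (cmod (U2 e x))\<^sup>2)" for e
  proof -
    have c1: "continuous_on {0..1} (fst f e)" "continuous_on {0..1} (U1 e)" using H2_cont[OF HS(1)[of e]] by auto
    have i1: "set_integrable lborel {0..1} (\<lambda>x. (cmod (fst f e x))\<^sup>2)" by (rule sq_int_cont[OF c1(1)])
    have i2: "set_integrable lborel {0..1} (\<lambda>x. (cmod (U1 e x))\<^sup>2)" by (rule sq_int_cont[OF c1(2)])
    have i3: "set_integrable lborel {0..1} (\<lambda>x. (cmod (U2 e x))\<^sup>2)" using HS(1)[of e] by (simp add: H2_triple_def)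
    have "(cmod (c e))\<^sup>2 * P = (LINT x:{0..1}|lborel. (cmod (c e))\<^sup>2 * (cmod (phi x))\<^sup>2)"
      unfolding P_def by (simp add: set_integral_mult_right)
    also have "\<dots> = (LINT x:{0..1}|lborel. (cmod (fst f e x))\<^sup>2)"
      by (rule set_lebesgue_integral_cong) (auto simp: uc norm_mult power_mult_distrib)
    also have "\<dots> \<le> (LINT x:{0..1}|lborel. (cmod (fst f e x))\<^sup>2 + (cmod (U1 e x))\<^sup>2 + (cmod (U2 e x))\<^sup>2)"
      by (rule set_integral_mono) (use i1 i2 i3 in \<open>auto intro!: set_integral_add\<close>)
    finally show ?thesis .
  qed
  have "(\<lambda>e. (cmod (c e))\<^sup>2 * P) summable_on UNIV"
    by (rule summable_on_comparison_test[OF summ]) (use sq P_pos in auto)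
  then have "(\<lambda>e. (cmod (c e))\<^sup>2) summable_on UNIV" using summable_on_cmult_left'[of P "\<lambda>e. (cmod (c e))\<^sup>2"] P_pos by simp
  moreover have "divfree c" unfolding divfree_def using dA dB by blast
  ultimately show ?thesis using uc w0 unfolding \<omega>_def by blast
qed

end

definition ends :: "edge \<Rightarrow> (int \<times> int) \<times> (int \<times> int)" where
  "ends e = (case e of ((p,q),D0) \<Rightarrow> ((p,q),(p-1,q+1)) | ((p,q),D1) \<Rightarrow> ((p-1,q+1),(p-1,q))
                     | ((p,q),D2) \<Rightarrow> ((p-1,q),(p,q)))"

definition Dop :: "(int \<times> int \<Rightarrow> 'a::ab_group_add) \<Rightarrow> edge \<Rightarrow> 'a" where
  "Dop \<psi> e = \<psi> (fst (ends e)) - \<psi> (snd (ends e))"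

lemma Dop_simps:
  "Dop \<psi> ((p,q),D0) = \<psi> (p,q) - \<psi> (p-1,q+1)"
  "Dop \<psi> ((p,q),D1) = \<psi> (p-1,q+1) - \<psi> (p-1,q)"
  "Dop \<psi> ((p,q),D2) = \<psi> (p-1,q) - \<psi> (p,q)"
  by (simp_all add: Dop_def ends_def)

definition hx :: "int \<times> int \<Rightarrow> edge \<Rightarrow> complex" where
  "hx z = Dop (\<lambda>w. if w = z then 1 else 0)"

lemma Dop_divfree: "divfree (Dop \<psi>)"
  unfolding divfree_def by (simp add: Dop_simps)

lemma hx_divfree: "divfree (hx z)"
  unfolding hx_def by (rule Dop_divfree)

lemma ends_hex: "fst (ends e) = z \<or> snd (ends e) = z \<Longrightarrow> e \<in> hexagon z"
proof -
  assume h: "fst (ends e) = z \<or> snd (ends e) = z"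
  obtain p q d where e: "e = ((p,q),d)" by (metis prod.collapse)
  obtain i j where z: "z = (i,j)" by fastforce
  show ?thesis using h unfolding e z hexagon_def ends_def
    by (cases d) (auto simp: algebra_simps)
qed

lemma hx_support: "e \<notin> hexagon z \<Longrightarrow> hx z e = 0"
  using ends_hex[of e z] unfolding hx_def Dop_def by auto

lemma Dop_support: "finite S \<Longrightarrow> (\<And>z. z \<notin> S \<Longrightarrow> \<psi> z = 0) \<Longrightarrow> finite {e. Dop \<psi> e \<noteq> 0}"
proof -
  assume S: "finite S" and z: "\<And>z. z \<notin> S \<Longrightarrow> \<psi> z = 0"
  have "{e. Dop \<psi> e \<noteq> 0} \<subseteq> (\<Union>z\<in>S. hexagon z)"
  proof
    fix e assume "e \<in> {e. Dop \<psi> e \<noteq> 0}"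
    then have "\<psi> (fst (ends e)) \<noteq> 0 \<or> \<psi> (snd (ends e)) \<noteq> 0" by (auto simp: Dop_def)
    then have "fst (ends e) \<in> S \<or> snd (ends e) \<in> S" using z by blast
    then show "e \<in> (\<Union>z\<in>S. hexagon z)" using ends_hex by blast
  qed
  moreover have "finite (\<Union>z\<in>S. hexagon z)" using S by (auto simp: hexagon_def split: prod.splits)
  ultimately show ?thesis by (rule finite_subset)
qed

lemma hx_eq: "hx w e = (if w = fst (ends e) then 1 else 0) - (if w = snd (ends e) then 1 else 0)"
  unfolding hx_def Dop_def by (auto)

lemma sum_delta_S:
  assumes S: "finite S" and z: "\<And>z. z \<notin> S \<Longrightarrow> \<psi> z = 0"
  shows "(\<Sum>w\<in>S. (if w = x then \<psi> w else 0)) = \<psi> x"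
  using S z by (simp add: sum.delta')

lemma Dop_sum:
  assumes S: "finite S" and z: "\<And>z. z \<notin> S \<Longrightarrow> \<psi> z = 0"
  shows "Dop \<psi> e = (\<Sum>w\<in>S. \<psi> w * hx w e)"
proof -
  have "(\<Sum>w\<in>S. \<psi> w * hx w e) = (\<Sum>w\<in>S. (if w = fst (ends e) then \<psi> w else 0) - (if w = snd (ends e) then \<psi> w else 0))"
    by (rule sum.cong) (auto simp: hx_eq)
  also have "\<dots> = (\<Sum>w\<in>S. (if w = fst (ends e) then \<psi> w else 0)) - (\<Sum>w\<in>S. (if w = snd (ends e) then \<psi> w else 0))"
    by (rule sum_subtractf)
  also have "\<dots> = Dop \<psi> e" using sum_delta_S[OF S z, where x="fst (ends e)"] sum_delta_S[OF S z, where x="snd (ends e)"]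
    by (simp add: Dop_def)
  finally show ?thesis by simp
qed

lemma hex_finite: "finite (hexagon z)"
  by (auto simp: hexagon_def split: prod.splits)

lemma hx_norm: "(\<Sum>\<^sub>\<infinity>e. hx z e * cnj (hx z e)) = 6"
proof -
  obtain i j where z: "z = (i,j)" by fastforce
  have "(\<Sum>\<^sub>\<infinity>e. hx z e * cnj (hx z e)) = (\<Sum>\<^sub>\<infinity>e\<in>hexagon z. hx z e * cnj (hx z e))"
    by (rule infsum_cong_neutral) (auto simp: hx_support)
  also have "\<dots> = (\<Sum>e\<in>hexagon z. hx z e * cnj (hx z e))" by (rule infsum_finite[OF hex_finite])
  also have "\<dots> = 6" unfolding z hexagon_def by (simp add: hx_def Dop_simps)
  finally show ?thesis .
qed

lemma hx_orth:
  assumes "i \<noteq> j"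
  shows "(\<Sum>\<^sub>\<infinity>e. hx (3 * i, 0) e * cnj (hx (3 * j, 0) e)) = 0"
proof (rule infsum_0)
  fix e :: edge
  show "hx (3 * i, 0) e * cnj (hx (3 * j, 0) e) = 0"
  proof (cases "e \<in> hexagon (3 * i, 0) \<and> e \<in> hexagon (3 * j, 0)")
    case True
    then show ?thesis using assms by (auto simp: hexagon_def)
  next
    case False
    then show ?thesis using hx_support[of e "(3*i,0)"] hx_support[of e "(3*j,0)"] by auto
  qed
qed

lemma summable_fin: "finite S \<Longrightarrow> (\<And>x. x \<notin> S \<Longrightarrow> f x = 0) \<Longrightarrow> f summable_on UNIV"
  using summable_on_cong_neutral[of S UNIV f f] summable_on_finite[of S f] by auto

lemma divfree_scale: "divfree c \<Longrightarrow> divfree (\<lambda>e. s * c e)"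
  unfolding divfree_def by (metis distrib_left mult_zero_right)

context setting begin

definition st :: "(edge \<Rightarrow> complex) \<Rightarrow> state" where "st c = ((\<lambda>e x. c e * phi x), (\<lambda>v. 0))"

definition Q where "Q = (LINT x:{0..1}|lborel. (cmod (phi x))\<^sup>2 + (cmod (phi1 x))\<^sup>2 + (cmod (phi2 x))\<^sup>2)"

lemma eig_of:
  assumes d: "divfree c" and s: "(\<lambda>e. (cmod (c e))\<^sup>2) summable_on UNIV"
  shows "is_eigenfunction a kinv m q0 lam (st c)"
proof -
  define U1 where "U1 = (\<lambda>e x. c e * phi1 x)"
  define U2 where "U2 = (\<lambda>e x. c e * phi2 x)"
  define u where "u = fst (st c)"
  define w where "w = snd (st c)"
  have u: "u e = (\<lambda>x. c e * phi x)" for e by (simp add: u_def st_def)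
  have w: "w v = 0" for v by (simp add: w_def st_def)
  have h1: "\<forall>e. H2_triple (u e) (U1 e) (U2 e) \<and> solves_ode a q0 lam (u e) (U2 e)"
    unfolding u U1_def U2_def using H2_scale[OF phiH] ode_scale[OF phiS] by blast
  have "(LINT x:{0..1}|lborel. (cmod (u e x))\<^sup>2 + (cmod (U1 e x))\<^sup>2 + (cmod (U2 e x))\<^sup>2)
      = (cmod (c e))\<^sup>2 * Q" for e
  proof -
    have "(LINT x:{0..1}|lborel. (cmod (u e x))\<^sup>2 + (cmod (U1 e x))\<^sup>2 + (cmod (U2 e x))\<^sup>2)
      = (LINT x:{0..1}|lborel. (cmod (c e))\<^sup>2 * ((cmod (phi x))\<^sup>2 + (cmod (phi1 x))\<^sup>2 + (cmod (phi2 x))\<^sup>2))"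
      by (simp add: u U1_def U2_def norm_mult power_mult_distrib algebra_simps)
    also have "\<dots> = (cmod (c e))\<^sup>2 * Q" unfolding Q_def by (rule set_integral_mult_right)
    finally show ?thesis .
  qed
  then have h2: "(\<lambda>e. LINT x:{0..1}|lborel. (cmod (u e x))\<^sup>2 + (cmod (U1 e x))\<^sup>2 + (cmod (U2 e x))\<^sup>2) summable_on UNIV"
    using summable_on_cmult_left[OF s, of Q] by simp
  have h3: "(\<lambda>v. (cmod (w v))\<^sup>2) summable_on UNIV" by (simp add: w)
  have h4: "\<forall>e. u e 0 - of_real (rho a kinv) * U1 e 0 = w (tail e) \<and> u e 1 + of_real (rho a kinv) * U1 e 1 = w (head e)"
  proof
    fix e
    have "c e * phi 0 - of_real (rho a kinv) * (c e * phi1 0) = c e * (phi 0 - of_real (rho a kinv) * phi1 0)"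
      by (simp add: algebra_simps)
    moreover have "c e * phi 1 + of_real (rho a kinv) * (c e * phi1 1) = c e * (phi 1 + of_real (rho a kinv) * phi1 1)"
      by (simp add: algebra_simps)
    ultimately show "u e 0 - of_real (rho a kinv) * U1 e 0 = w (tail e) \<and> u e 1 + of_real (rho a kinv) * U1 e 1 = w (head e)"
      using phiL phiR by (simp add: u U1_def w)
  qed
  have h5: "\<forall>v. of_real a * ((\<Sum>e\<in>{e. tail e = v}. - U1 e 0) + (\<Sum>e\<in>{e. head e = v}. U1 e 1)) = of_real (lam * m) * w v"
  proof
    fix v :: vertex
    obtain p q b where v: "v = ((p,q),b)" by (metis prod.collapse)
    show "of_real a * ((\<Sum>e\<in>{e. tail e = v}. - U1 e 0) + (\<Sum>e\<in>{e. head e = v}. U1 e 1)) = of_real (lam * m) * w v"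
    proof (cases b)
      case True
      have vv: "v = ((p,q),True)" using v True by simp
      have "(\<Sum>e\<in>{e. tail e = v}. - U1 e 0) = - phi1 0 * (c ((p,q),D0) + c ((p,q),D1) + c ((p,q),D2))"
        unfolding vv tail_set_T by (simp add: U1_def algebra_simps)
      moreover have "c ((p,q),D0) + c ((p,q),D1) + c ((p,q),D2) = 0" using d unfolding divfree_def by blast
      ultimately show ?thesis unfolding vv head_set_T by (simp add: w)
    next
      case False
      have vv: "v = ((p,q),False)" using v False by simp
      have "(\<Sum>e\<in>{e. head e = v}. U1 e 1) = phi1 1 * (c ((p,q),D0) + c ((p+1,q),D1) + c ((p,q+1),D2))"
        unfolding vv head_set_F by (simp add: U1_def algebra_simps)
      moreover have "c ((p,q),D0) + c ((p+1,q),D1) + c ((p,q+1),D2) = 0" using d unfolding divfree_def by blast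
      ultimately show ?thesis unfolding vv tail_set_F by (simp add: w)
    qed
  qed
  show ?thesis unfolding is_eigenfunction_def u_def[symmetric] w_def[symmetric]
    using h1 h2 h3 h4 h5 by blast
qed

lemma int_sq_st:
  assumes "\<And>x. x \<in> {0..1} \<Longrightarrow> g x = k * phi x"
  shows "(LINT x:{0..1}|lborel. (cmod (g x))\<^sup>2) = (cmod k)\<^sup>2 * P"
proof -
  have "(LINT x:{0..1}|lborel. (cmod (g x))\<^sup>2) = (LINT x:{0..1}|lborel. (cmod k)\<^sup>2 * (cmod (phi x))\<^sup>2)"
    by (rule set_lebesgue_integral_cong) (auto simp: assms norm_mult power_mult_distrib)
  also have "\<dots> = (cmod k)\<^sup>2 * P" unfolding P_def by (rule set_integral_mult_right)
  finally show ?thesis .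
qed

lemma Hnorm2_st:
  assumes "\<And>e x. x \<in> {0..1} \<Longrightarrow> fst g e x = k e * phi x" "\<And>v. snd g v = 0"
  shows "Hnorm2 m g = (\<Sum>\<^sub>\<infinity>e. (cmod (k e))\<^sup>2) * P"
proof -
  have "(LINT x:{0..1}|lborel. (cmod (fst g e x))\<^sup>2) = (cmod (k e))\<^sup>2 * P" for e
    by (rule int_sq_st) (use assms in auto)
  then show ?thesis unfolding Hnorm2_def using assms(2) by (simp add: infsum_cmult_left')
qed

lemma Hinner_st:
  assumes "\<And>e x. x \<in> {0..1} \<Longrightarrow> fst f e x = k e * phi x" "\<And>v. snd f v = 0"
     "\<And>e x. x \<in> {0..1} \<Longrightarrow> fst g e x = l e * phi x" "\<And>v. snd g v = 0"
  shows "Hinner m f g = (\<Sum>\<^sub>\<infinity>e. k e * cnj (l e)) * of_real P"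
proof -
  have "(LINT x:{0..1}|lborel. fst f e x * cnj (fst g e x)) = k e * cnj (l e) * of_real P" for e
  proof -
    have "(LINT x:{0..1}|lborel. fst f e x * cnj (fst g e x))
        = (LINT x:{0..1}|lborel. (k e * cnj (l e)) * complex_of_real ((cmod (phi x))\<^sup>2))"
      by (rule set_lebesgue_integral_cong) (auto simp: assms complex_norm_square[symmetric] algebra_simps simp del: of_real_power)
    also have "\<dots> = (k e * cnj (l e)) * (LINT x:{0..1}|lborel. complex_of_real ((cmod (phi x))\<^sup>2))"
      by (rule set_integral_mult_right)
    also have "\<dots> = k e * cnj (l e) * of_real P" by (simp add: set_integral_complex_of_real P_def del: of_real_power)
    finally show ?thesis .
  qed
  then show ?thesis unfolding Hinner_def using assms by (simp add: infsum_cmult_left')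
qed

lemma part1:
  "\<exists>F. (\<forall>i<(N::nat). is_eigenfunction a kinv m q0 lam (F i)) \<and>
       (\<forall>i<N. \<forall>j<N. Hinner m (F i) (F j) = (if i = j then 1 else 0))"
proof -
  define s :: complex where "s = of_real (1 / sqrt (6 * P))"
  define F where "F i = st (\<lambda>e. s * hx (3 * int i, 0) e)" for i
  have eig: "is_eigenfunction a kinv m q0 lam (F i)" for i
    unfolding F_def
  proof (rule eig_of)
    show "divfree (\<lambda>e. s * hx (3 * int i, 0) e)" by (rule divfree_scale[OF hx_divfree])
    show "(\<lambda>e. (cmod (s * hx (3 * int i, 0) e))\<^sup>2) summable_on UNIV"
      by (rule summable_fin[OF hex_finite[of "(3 * int i, 0)"]]) (simp add: hx_support)
  qed
  have ss: "s * cnj s * of_real P = 1 / 6"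
  proof -
    have r: "(1 / sqrt (6 * P)) * (1 / sqrt (6 * P)) = 1 / (6 * P)" using P_pos
      by (simp add: power2_eq_square[symmetric] power_divide)
    have "s * cnj s = of_real ((1 / sqrt (6 * P)) * (1 / sqrt (6 * P)))" unfolding s_def
      by (simp only: complex_cnj_complex_of_real of_real_mult)
    then have "s * cnj s = of_real (1 / (6 * P))" using r by simp
    then have "s * cnj s * of_real P = of_real (1 / (6 * P) * P)" by (simp only: of_real_mult)
    also have "1 / (6 * P) * P = 1 / 6" using P_pos by simp
    finally show ?thesis by simp
  qed
  have inner: "Hinner m (F i) (F j) = s * cnj s * of_real P * (\<Sum>\<^sub>\<infinity>e. hx (3 * int i, 0) e * cnj (hx (3 * int j, 0) e))" for i j
  proof -
    have "Hinner m (F i) (F j) = (\<Sum>\<^sub>\<infinity>e. (s * hx (3 * int i, 0) e) * cnj (s * hx (3 * int j, 0) e)) * of_real P"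
      by (rule Hinner_st) (simp_all add: F_def st_def)
    also have "(\<Sum>\<^sub>\<infinity>e. (s * hx (3 * int i, 0) e) * cnj (s * hx (3 * int j, 0) e))
        = (\<Sum>\<^sub>\<infinity>e. (s * cnj s) * (hx (3 * int i, 0) e * cnj (hx (3 * int j, 0) e)))"
      by (simp add: algebra_simps)
    also have "\<dots> = (s * cnj s) * (\<Sum>\<^sub>\<infinity>e. hx (3 * int i, 0) e * cnj (hx (3 * int j, 0) e))"
      by (rule infsum_cmult_right')
    finally show ?thesis by (simp add: algebra_simps)
  qed
  have HH: "Hinner m (F i) (F j) = (if i = j then 1 else 0)" for i j
  proof (cases "i = j")
    case True
    have "Hinner m (F i) (F j) = (s * cnj s * of_real P) * 6"
      unfolding True inner[of j j] by (simp only: hx_norm)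
    also have "\<dots> = 1" unfolding ss by simp
    finally show ?thesis using True by simp
  next
    case False
    then have "int i \<noteq> int j" by simp
    have "Hinner m (F i) (F j) = (s * cnj s * of_real P) * 0"
      unfolding inner[of i j] by (simp only: hx_orth[OF \<open>int i \<noteq> int j\<close>])
    also have "\<dots> = 0" by (rule mult_zero_right)
    finally show ?thesis using False by (simp only: if_False)
  qed
  show ?thesis apply (rule exI[of _ F]) using eig HH by auto
qed

end

lemma set_integral_Re:
  assumes "set_integrable M A (f :: _ \<Rightarrow> complex)"
  shows "(LINT x:A|M. Re (f x)) = Re (LINT x:A|M. f x)"
proof -
  have "(\<lambda>x. indicator A x *\<^sub>R Re (f x)) = (\<lambda>x. Re (indicator A x *\<^sub>R f x))" by (simp add: fun_eq_iff)
  moreover have "(LINT x|M. Re (indicator A x *\<^sub>R f x)) = Re (LINT x|M. indicator A x *\<^sub>R f x)"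
    by (rule integral_Re[OF assms[unfolded set_integrable_def]])
  ultimately show ?thesis unfolding set_lebesgue_integral_def by simp
qed

lemma set_integrable_Re:
  assumes "set_integrable M A (f :: _ \<Rightarrow> complex)"
  shows "set_integrable M A (\<lambda>x. Re (f x))"
proof -
  have "(\<lambda>x. indicator A x *\<^sub>R Re (f x)) = (\<lambda>x. Re (indicator A x *\<^sub>R f x))" by (simp add: fun_eq_iff)
  moreover have "integrable M (\<lambda>x. Re (indicator A x *\<^sub>R f x))"
    by (rule integrable_Re[OF assms[unfolded set_integrable_def]])
  ultimately show ?thesis unfolding set_integrable_def by simp
qed

lemma cnj_meas: "f \<in> borel_measurable M \<Longrightarrow> (\<lambda>x. cnj (f x)) \<in> borel_measurable M"
  by (rule borel_measurable_continuous_on[of cnj]) (auto intro: continuous_intros)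

lemma sbm_cont: "continuous_on {0..1} (f :: real \<Rightarrow> complex) \<Longrightarrow> set_borel_measurable lborel {0..1} f"
  unfolding set_borel_measurable_def
  using borel_measurable_continuous_on_indicator[of "{0..1}" f] by simp

lemma sbm_prod:
  assumes "set_borel_measurable lborel {0..1} (f :: real \<Rightarrow> complex)" "set_borel_measurable lborel {0..1} g"
  shows "set_borel_measurable lborel {0..1} (\<lambda>x. f x * cnj (g x))"
proof -
  have "(\<lambda>x. (indicator {0..1} x *\<^sub>R f x) * cnj (indicator {0..1} x *\<^sub>R g x)) \<in> borel_measurable lborel"
    using assms unfolding set_borel_measurable_def by (intro borel_measurable_times cnj_meas)
  moreover have "(\<lambda>x. (indicator {0..1} x *\<^sub>R f x) * cnj (indicator {0..1} x *\<^sub>R g x)) = (\<lambda>x. indicator {0..1} x *\<^sub>R (f x * cnj (g x)))"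
    by (auto simp: indicator_def fun_eq_iff)
  ultimately show ?thesis unfolding set_borel_measurable_def by simp
qed

lemma prod_bound: "cmod (a * cnj b) \<le> (cmod a)\<^sup>2 + (cmod b)\<^sup>2"
proof -
  have "0 \<le> (cmod a - cmod b)\<^sup>2" by simp
  then have "2 * (cmod a * cmod b) \<le> (cmod a)\<^sup>2 + (cmod b)\<^sup>2" by (simp add: power2_diff)
  moreover have "cmod a * cmod b \<ge> 0" by simp
  moreover have "cmod (a * cnj b) = cmod a * cmod b" by (simp add: norm_mult)
  ultimately show ?thesis by linarith
qed

lemma sint_prod:
  assumes "set_borel_measurable lborel {0..1} (f :: real \<Rightarrow> complex)" "set_borel_measurable lborel {0..1} g"
    "set_integrable lborel {0..1} (\<lambda>x. (cmod (f x))\<^sup>2)" "set_integrable lborel {0..1} (\<lambda>x. (cmod (g x))\<^sup>2)"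
  shows "set_integrable lborel {0..1} (\<lambda>x. f x * cnj (g x))"
proof (rule set_integrable_bound)
  show "set_integrable lborel {0..1} (\<lambda>x. (cmod (f x))\<^sup>2 + (cmod (g x))\<^sup>2)"
    using assms(3,4) by (rule set_integral_add)
  show "set_borel_measurable lborel {0..1} (\<lambda>x. f x * cnj (g x))" by (rule sbm_prod[OF assms(1,2)])
  show "AE x\<in>{0..1} in lborel. norm (f x * cnj (g x)) \<le> norm ((cmod (f x))\<^sup>2 + (cmod (g x))\<^sup>2)"
    using prod_bound by (auto intro!: AE_I2 order_trans[OF _ abs_ge_self])
qed

lemma sq_expand: "(cmod (g - d * p))\<^sup>2 = (cmod g)\<^sup>2 - 2 * Re (cnj d * (g * cnj p)) + (cmod d)\<^sup>2 * (cmod p)\<^sup>2"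
  unfolding cmod_power2 by (simp add: power2_eq_square algebra_simps)

lemma divfree_add: "divfree c \<Longrightarrow> divfree d \<Longrightarrow> divfree (\<lambda>e. c e + d e)"
  unfolding divfree_def
proof (intro conjI allI; elim conjE)
  fix p q
  assume c1: "\<forall>p q. c ((p, q), D0) + c ((p, q), D1) + c ((p, q), D2) = 0"
    and c2: "\<forall>p q. c ((p, q), D0) + c ((p + 1, q), D1) + c ((p, q + 1), D2) = 0"
    and d1: "\<forall>p q. d ((p, q), D0) + d ((p, q), D1) + d ((p, q), D2) = 0"
    and d2: "\<forall>p q. d ((p, q), D0) + d ((p + 1, q), D1) + d ((p, q + 1), D2) = 0"
  have "c ((p, q), D0) + d ((p, q), D0) + (c ((p, q), D1) + d ((p, q), D1)) + (c ((p, q), D2) + d ((p, q), D2))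
      = (c ((p, q), D0) + c ((p, q), D1) + c ((p, q), D2)) + (d ((p, q), D0) + d ((p, q), D1) + d ((p, q), D2))"
    by (simp add: algebra_simps)
  then show "c ((p, q), D0) + d ((p, q), D0) + (c ((p, q), D1) + d ((p, q), D1)) + (c ((p, q), D2) + d ((p, q), D2)) = 0"
    using c1 d1 by simp
  have "c ((p, q), D0) + d ((p, q), D0) + (c ((p + 1, q), D1) + d ((p + 1, q), D1)) + (c ((p, q + 1), D2) + d ((p, q + 1), D2))
      = (c ((p, q), D0) + c ((p + 1, q), D1) + c ((p, q + 1), D2)) + (d ((p, q), D0) + d ((p + 1, q), D1) + d ((p, q + 1), D2))"
    by (simp add: algebra_simps)
  then show "c ((p, q), D0) + d ((p, q), D0) + (c ((p + 1, q), D1) + d ((p + 1, q), D1)) + (c ((p, q + 1), D2) + d ((p, q + 1), D2)) = 0"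
    using c2 d2 by simp
qed

lemma divfree_zero: "divfree (\<lambda>e. 0)"
  unfolding divfree_def by simp

lemma l2_lin:
  assumes "(\<lambda>e. (cmod (c e))\<^sup>2) summable_on UNIV" "(\<lambda>e. (cmod (d e))\<^sup>2) summable_on UNIV"
  shows "(\<lambda>e. (cmod (\<alpha> * c e + \<beta> * d e))\<^sup>2) summable_on UNIV"
proof (rule summable_on_comparison_test)
  show "(\<lambda>e. 2 * (cmod \<alpha>)\<^sup>2 * (cmod (c e))\<^sup>2 + 2 * (cmod \<beta>)\<^sup>2 * (cmod (d e))\<^sup>2) summable_on UNIV"
    using assms by (intro summable_on_add summable_on_cmult_right)
  show "\<And>e. e \<in> UNIV \<Longrightarrow> (cmod (\<alpha> * c e + \<beta> * d e))\<^sup>2 \<le> 2 * (cmod \<alpha>)\<^sup>2 * (cmod (c e))\<^sup>2 + 2 * (cmod \<beta>)\<^sup>2 * (cmod (d e))\<^sup>2"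
    by (rule sq_lin_bound)
qed simp

lemma norm3: "cmod (x + y + z) \<le> cmod x + cmod y + cmod z"
  by (rule order_trans[OF norm_triangle_ineq add_right_mono[OF norm_triangle_ineq]])

lemma single_le_infsum:
  fixes f :: "'a \<Rightarrow> real"
  assumes "f summable_on UNIV" "\<And>x. 0 \<le> f x"
  shows "f x \<le> infsum f UNIV"
proof -
  have "infsum f {x} \<le> infsum f UNIV"
    by (rule infsum_mono2) (use assms summable_on_finite in auto)
  then show ?thesis by simp
qed

context setting begin

lemma phi_sbm: "set_borel_measurable lborel {0..1} phi" by (rule sbm_cont[OF phi_cont(1)])

lemma expand:
  assumes mg: "set_borel_measurable lborel {0..1} g" and ig: "set_integrable lborel {0..1} (\<lambda>x. (cmod (g x))\<^sup>2)"
  shows "(LINT x:{0..1}|lborel. (cmod (g x - d * phi x))\<^sup>2)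
       = (LINT x:{0..1}|lborel. (cmod (g x))\<^sup>2) - 2 * Re (cnj d * (LINT x:{0..1}|lborel. g x * cnj (phi x))) + (cmod d)\<^sup>2 * P"
proof -
  have ip: "set_integrable lborel {0..1} (\<lambda>x. g x * cnj (phi x))"
    by (rule sint_prod[OF mg phi_sbm ig sq_int_cont[OF phi_cont(1)]])
  have ip2: "set_integrable lborel {0..1} (\<lambda>x. cnj d * (g x * cnj (phi x)))"
    using ip by (rule set_integrable_mult_right)
  have iRe: "set_integrable lborel {0..1} (\<lambda>x. 2 * Re (cnj d * (g x * cnj (phi x))))"
    by (intro set_integrable_mult_right set_integrable_Re ip2)
  have iphi: "set_integrable lborel {0..1} (\<lambda>x. (cmod d)\<^sup>2 * (cmod (phi x))\<^sup>2)"
    by (intro set_integrable_mult_right sq_int_cont[OF phi_cont(1)])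
  have "(LINT x:{0..1}|lborel. (cmod (g x - d * phi x))\<^sup>2)
      = (LINT x:{0..1}|lborel. ((cmod (g x))\<^sup>2 - 2 * Re (cnj d * (g x * cnj (phi x)))) + (cmod d)\<^sup>2 * (cmod (phi x))\<^sup>2)"
    by (simp add: sq_expand)
  also have "\<dots> = (LINT x:{0..1}|lborel. (cmod (g x))\<^sup>2 - 2 * Re (cnj d * (g x * cnj (phi x)))) + (LINT x:{0..1}|lborel. (cmod d)\<^sup>2 * (cmod (phi x))\<^sup>2)"
    by (rule set_integral_add(2)[OF set_integral_diff(1)[OF ig iRe] iphi])
  also have "(LINT x:{0..1}|lborel. (cmod (g x))\<^sup>2 - 2 * Re (cnj d * (g x * cnj (phi x))))
      = (LINT x:{0..1}|lborel. (cmod (g x))\<^sup>2) - (LINT x:{0..1}|lborel. 2 * Re (cnj d * (g x * cnj (phi x))))"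
    by (rule set_integral_diff(2)[OF ig iRe])
  also have "(LINT x:{0..1}|lborel. 2 * Re (cnj d * (g x * cnj (phi x)))) = 2 * Re (cnj d * (LINT x:{0..1}|lborel. g x * cnj (phi x)))"
  proof -
    have "(LINT x:{0..1}|lborel. 2 * Re (cnj d * (g x * cnj (phi x)))) = 2 * (LINT x:{0..1}|lborel. Re (cnj d * (g x * cnj (phi x))))"
      by (rule set_integral_mult_right)
    also have "(LINT x:{0..1}|lborel. Re (cnj d * (g x * cnj (phi x)))) = Re (LINT x:{0..1}|lborel. cnj d * (g x * cnj (phi x)))"
      by (rule set_integral_Re[OF ip2])
    also have "(LINT x:{0..1}|lborel. cnj d * (g x * cnj (phi x))) = cnj d * (LINT x:{0..1}|lborel. g x * cnj (phi x))"
      by (rule set_integral_mult_right)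
    finally show ?thesis .
  qed
  also have "(LINT x:{0..1}|lborel. (cmod d)\<^sup>2 * (cmod (phi x))\<^sup>2) = (cmod d)\<^sup>2 * P"
    unfolding P_def by (rule set_integral_mult_right)
  finally show ?thesis .
qed

definition coef :: "(real \<Rightarrow> complex) \<Rightarrow> complex" where
  "coef g = (LINT x:{0..1}|lborel. g x * cnj (phi x)) / of_real P"

lemma proj:
  assumes mg: "set_borel_measurable lborel {0..1} g" and ig: "set_integrable lborel {0..1} (\<lambda>x. (cmod (g x))\<^sup>2)"
  shows "(LINT x:{0..1}|lborel. (cmod (g x - d * phi x))\<^sup>2)
       = (LINT x:{0..1}|lborel. (cmod (g x - coef g * phi x))\<^sup>2) + (cmod (coef g - d))\<^sup>2 * P"
proof -
  define J where "J = (LINT x:{0..1}|lborel. g x * cnj (phi x))"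
  define c where "c = coef g"
  have J: "J = c * of_real P" using P_pos by (simp add: c_def coef_def J_def)
  have e1: "(LINT x:{0..1}|lborel. (cmod (g x - d * phi x))\<^sup>2)
       = (LINT x:{0..1}|lborel. (cmod (g x))\<^sup>2) - 2 * Re (cnj d * J) + (cmod d)\<^sup>2 * P"
    unfolding J_def by (rule expand[OF mg ig])
  have e2: "(LINT x:{0..1}|lborel. (cmod (g x - c * phi x))\<^sup>2)
       = (LINT x:{0..1}|lborel. (cmod (g x))\<^sup>2) - 2 * Re (cnj c * J) + (cmod c)\<^sup>2 * P"
    unfolding J_def by (rule expand[OF mg ig])
  have r1: "Re (cnj d * J) = P * Re (cnj d * c)" unfolding J by (simp add: algebra_simps)
  have r2: "Re (cnj c * J) = P * (cmod c)\<^sup>2" unfolding J cmod_power2 by (simp add: power2_eq_square algebra_simps)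
  have r3: "(cmod (c - d))\<^sup>2 = (cmod c)\<^sup>2 - 2 * Re (cnj d * c) + (cmod d)\<^sup>2"
    unfolding cmod_power2 by (simp add: power2_eq_square algebra_simps)
  show ?thesis unfolding c_def[symmetric] e1 e2 r1 r2 r3 by (simp add: algebra_simps)
qed


lemma lincomb_struct:
  assumes "\<forall>i<n. is_eigenfunction a kinv m q0 lam (F i)"
  shows "\<exists>D. (\<forall>e. \<forall>x\<in>{0..1}. fst (lincomb cf F n) e x = D e * phi x) \<and> (\<forall>v. snd (lincomb cf F n) v = 0) \<and>
             divfree D \<and> (\<lambda>e. (cmod (D e))\<^sup>2) summable_on UNIV"
  using assms
proof (induction n)
  case 0
  show ?case by (intro exI[of _ "\<lambda>e. 0"]) (simp add: lincomb_def divfree_zero)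
next
  case (Suc n)
  then obtain D where D: "\<forall>e. \<forall>x\<in>{0..1}. fst (lincomb cf F n) e x = D e * phi x" "\<forall>v. snd (lincomb cf F n) v = 0"
    "divfree D" "(\<lambda>e. (cmod (D e))\<^sup>2) summable_on UNIV" by auto
  have "is_eigenfunction a kinv m q0 lam (F n)" using Suc.prems by simp
  from eig_struct[OF this] obtain d where d: "\<forall>e. \<forall>x\<in>{0..1}. fst (F n) e x = d e * phi x" "\<forall>v. snd (F n) v = 0"
    "divfree d" "(\<lambda>e. (cmod (d e))\<^sup>2) summable_on UNIV" by blast
  show ?case
  proof (intro exI[of _ "\<lambda>e. 1 * D e + cf n * d e"] conjI allI ballI)
    fix e and x :: real assume x: "x \<in> {0..1}"
    have l: "fst (lincomb cf F (Suc n)) e x = fst (lincomb cf F n) e x + cf n * fst (F n) e x"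
      by (simp add: lincomb_def)
    have l1: "fst (lincomb cf F n) e x = D e * phi x" using D(1) x by blast
    have l2: "fst (F n) e x = d e * phi x" using d(1) x by blast
    show "fst (lincomb cf F (Suc n)) e x = (1 * D e + cf n * d e) * phi x"
      unfolding l l1 l2 by (simp add: algebra_simps)
  next
    fix v
    have "snd (lincomb cf F (Suc n)) v = snd (lincomb cf F n) v + cf n * snd (F n) v" by (simp add: lincomb_def)
    then show "snd (lincomb cf F (Suc n)) v = 0" by (simp only: D(2)[rule_format] d(2)[rule_format]) simp
  next
    show "divfree (\<lambda>e. 1 * D e + cf n * d e)"
      using divfree_add[OF D(3) divfree_scale[OF d(3), of "cf n"]] by simp
    show "(\<lambda>e. (cmod (1 * D e + cf n * d e))\<^sup>2) summable_on UNIV" by (rule l2_lin[OF D(4) d(4)])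
  qed
qed

lemma diff_bound:
  assumes mg: "set_borel_measurable lborel {0..1} g" and ig: "set_integrable lborel {0..1} (\<lambda>x. (cmod (g x))\<^sup>2)"
  shows "(LINT x:{0..1}|lborel. (cmod (g x - d * phi x))\<^sup>2) \<le> 2 * (LINT x:{0..1}|lborel. (cmod (g x))\<^sup>2) + 2 * (cmod d)\<^sup>2 * P"
proof -
  have i2: "set_integrable lborel {0..1} (\<lambda>x. (cmod (1 * g x + (- d) * phi x))\<^sup>2)"
    by (rule sqint_lin[OF mg phi_sbm ig sq_int_cont[OF phi_cont(1)]])
  have i3: "set_integrable lborel {0..1} (\<lambda>x. 2 * (cmod 1)\<^sup>2 * (cmod (g x))\<^sup>2 + 2 * (cmod (- d))\<^sup>2 * (cmod (phi x))\<^sup>2)"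
    using ig sq_int_cont[OF phi_cont(1)] by (intro set_integral_add set_integrable_mult_right) auto
  have "(LINT x:{0..1}|lborel. (cmod (g x - d * phi x))\<^sup>2) = (LINT x:{0..1}|lborel. (cmod (1 * g x + (- d) * phi x))\<^sup>2)"
    by simp
  also have "\<dots> \<le> (LINT x:{0..1}|lborel. 2 * (cmod 1)\<^sup>2 * (cmod (g x))\<^sup>2 + 2 * (cmod (- d))\<^sup>2 * (cmod (phi x))\<^sup>2)"
    by (rule set_integral_mono[OF i2 i3 sq_lin_bound])
  also have "\<dots> = 2 * (LINT x:{0..1}|lborel. (cmod (g x))\<^sup>2) + 2 * (cmod d)\<^sup>2 * P"
    using ig sq_int_cont[OF phi_cont(1)] unfolding P_def
    by (simp add: set_integral_add set_integrable_mult_right set_integral_mult_right)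
  finally show ?thesis .
qed

lemma part3:
  assumes inH: "in_H m f" and cl: "in_closed_loop_span a kinv m q0 lam f"
  shows "\<exists>g. is_eigenfunction a kinv m q0 lam g \<and> Hnorm2 m (state_diff f g) = 0"
proof -
  have mf: "\<And>e. set_borel_measurable lborel {0..1} (fst f e)"
    and iff: "\<And>e. set_integrable lborel {0..1} (\<lambda>x. (cmod (fst f e x))\<^sup>2)"
    and sf: "(\<lambda>e. LINT x:{0..1}|lborel. (cmod (fst f e x))\<^sup>2) summable_on UNIV"
    using inH unfolding in_H_def by auto
  define c where "c e = coef (fst f e)" for e
  define S where "S e = (LINT x:{0..1}|lborel. (cmod (fst f e x - c e * phi x))\<^sup>2)" for e
  define A where "A = infsum S UNIV"
  define Bv where "Bv = (\<Sum>\<^sub>\<infinity>v. (cmod (snd f v))\<^sup>2)"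
  have S_nn: "S e \<ge> 0" for e unfolding S_def set_lebesgue_integral_def by (rule Bochner_Integration.integral_nonneg) auto
  have Bv_nn: "Bv \<ge> 0" unfolding Bv_def by (rule infsum_nonneg) auto
  have projf: "(LINT x:{0..1}|lborel. (cmod (fst f e x - d * phi x))\<^sup>2) = S e + (cmod (c e - d))\<^sup>2 * P" for e d
    unfolding S_def c_def by (rule proj[OF mf iff])
  have key: "\<exists>D. A + m * Bv < \<epsilon> \<and> (\<forall>e. (cmod (c e - D e))\<^sup>2 * P < \<epsilon>) \<and> divfree D" if eps: "\<epsilon> > 0" for \<epsilon>
  proof -
    obtain n cf F where F: "\<forall>i<n. is_loop_state a kinv m q0 lam (F i)"
      and Fe: "Hnorm2 m (state_diff f (lincomb cf F n)) < \<epsilon>"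
      using cl eps unfolding in_closed_loop_span_def by blast
    have "\<forall>i<n. is_eigenfunction a kinv m q0 lam (F i)" using F unfolding is_loop_state_def by blast
    from lincomb_struct[OF this, of cf] obtain D where
      D: "\<forall>e. \<forall>x\<in>{0..1}. fst (lincomb cf F n) e x = D e * phi x" "\<forall>v. snd (lincomb cf F n) v = 0"
      "divfree D" "(\<lambda>e. (cmod (D e))\<^sup>2) summable_on UNIV" by blast
    define T where "T e = (LINT x:{0..1}|lborel. (cmod (fst f e x - D e * phi x))\<^sup>2)" for e
    have HT: "Hnorm2 m (state_diff f (lincomb cf F n)) = infsum T UNIV + m * Bv"
    proof -
      have "(LINT x:{0..1}|lborel. (cmod (fst f e x - fst (lincomb cf F n) e x))\<^sup>2) = T e" for e
        unfolding T_def by (rule set_lebesgue_integral_cong) (auto simp: D(1)[rule_format])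
      then show ?thesis unfolding Hnorm2_def state_diff_def Bv_def by (simp add: D(2)[rule_format])
    qed
    have TS: "T e = S e + (cmod (c e - D e))\<^sup>2 * P" for e unfolding T_def by (rule projf)
    have Tb: "T e \<le> 2 * (LINT x:{0..1}|lborel. (cmod (fst f e x))\<^sup>2) + 2 * (cmod (D e))\<^sup>2 * P" for e
      unfolding T_def by (rule diff_bound[OF mf iff])
    have T_nn: "T e \<ge> 0" for e using TS S_nn P_pos by (simp add: add_nonneg_nonneg)
    have sT: "T summable_on UNIV"
    proof (rule summable_on_comparison_test)
      show "(\<lambda>e. 2 * (LINT x:{0..1}|lborel. (cmod (fst f e x))\<^sup>2) + 2 * (cmod (D e))\<^sup>2 * P) summable_on UNIV"
        using sf D(4) by (intro summable_on_add summable_on_cmult_right summable_on_cmult_left)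
    qed (use Tb T_nn in auto)
    have sS: "S summable_on UNIV"
      by (rule summable_on_comparison_test[OF sT]) (use TS S_nn P_pos in auto)
    have "A \<le> infsum T UNIV" unfolding A_def
      by (rule infsum_mono[OF sS sT]) (use TS P_pos in auto)
    then have "A + m * Bv < \<epsilon>" using Fe HT by simp
    moreover have "(cmod (c e - D e))\<^sup>2 * P < \<epsilon>" for e
    proof -
      have "(cmod (c e - D e))\<^sup>2 * P \<le> T e" using TS S_nn by simp
      also have "\<dots> \<le> infsum T UNIV" by (rule single_le_infsum[OF sT T_nn])
      also have "\<dots> \<le> infsum T UNIV + m * Bv" using m_nn Bv_nn by simp
      finally show ?thesis using Fe HT by simp
    qed
    ultimately show ?thesis using D(3) by blast
  qed
  have A_nn: "A \<ge> 0" unfolding A_def by (rule infsum_nonneg) (use S_nn in auto)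
  have AB0: "A + m * Bv = 0"
  proof -
    have "A + m * Bv \<le> 0"
    proof (rule field_le_epsilon)
      fix \<epsilon> :: real assume "\<epsilon> > 0"
      then show "A + m * Bv \<le> 0 + \<epsilon>" using key[of \<epsilon>] by auto
    qed
    moreover have "A + m * Bv \<ge> 0" using A_nn Bv_nn m_nn by simp
    ultimately show ?thesis by simp
  qed
  have close: "\<exists>D. divfree D \<and> (\<forall>e. cmod (c e - D e) < \<delta>)" if "\<delta> > 0" for \<delta>
  proof -
    have pd: "P * \<delta>\<^sup>2 > 0" using P_pos that by simp
    obtain D where D: "\<forall>e. (cmod (c e - D e))\<^sup>2 * P < P * \<delta>\<^sup>2" "divfree D"
      using key[OF pd] by blast
    have "cmod (c e - D e) < \<delta>" for e
    proof -
      have "(cmod (c e - D e))\<^sup>2 < \<delta>\<^sup>2" using D(1)[rule_format, of e] P_pos by (simp add: mult.commute)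
      then show ?thesis using that by (simp add: power_less_imp_less_base)
    qed
    then show ?thesis using D(2) by blast
  qed
  have zero_of_small: "z = 0" if "\<And>\<delta>. \<delta> > 0 \<Longrightarrow> cmod z < 3 * \<delta>" for z :: complex
  proof (rule ccontr)
    assume "z \<noteq> 0"
    then have "cmod z > 0" by simp
    then show False using that[of "cmod z / 3"] by simp
  qed
  have dc: "divfree c"
    unfolding divfree_def
  proof (intro conjI allI)
    fix p q
    show "c ((p,q),D0) + c ((p,q),D1) + c ((p,q),D2) = 0"
    proof (rule zero_of_small)
      fix \<delta> :: real assume "\<delta> > 0"
      then obtain D where D: "divfree D" "\<forall>e. cmod (c e - D e) < \<delta>" using close by blast
      have z: "D ((p,q),D0) + D ((p,q),D1) + D ((p,q),D2) = 0" using D(1) unfolding divfree_def by blast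
      have "c ((p,q),D0) + c ((p,q),D1) + c ((p,q),D2)
          = (c ((p,q),D0) - D ((p,q),D0)) + (c ((p,q),D1) - D ((p,q),D1)) + (c ((p,q),D2) - D ((p,q),D2))"
        using z by (simp add: algebra_simps)
      also have "cmod \<dots> < 3 * \<delta>" using D(2)[rule_format, of "((p,q),D0)"] D(2)[rule_format, of "((p,q),D1)"] D(2)[rule_format, of "((p,q),D2)"]
          norm3[of "c ((p,q),D0) - D ((p,q),D0)" "c ((p,q),D1) - D ((p,q),D1)" "c ((p,q),D2) - D ((p,q),D2)"]
        by linarith
      finally show "cmod (c ((p,q),D0) + c ((p,q),D1) + c ((p,q),D2)) < 3 * \<delta>" .
    qed
    show "c ((p,q),D0) + c ((p+1,q),D1) + c ((p,q+1),D2) = 0"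
    proof (rule zero_of_small)
      fix \<delta> :: real assume "\<delta> > 0"
      then obtain D where D: "divfree D" "\<forall>e. cmod (c e - D e) < \<delta>" using close by blast
      have z: "D ((p,q),D0) + D ((p+1,q),D1) + D ((p,q+1),D2) = 0" using D(1) unfolding divfree_def by blast
      have "c ((p,q),D0) + c ((p+1,q),D1) + c ((p,q+1),D2)
          = (c ((p,q),D0) - D ((p,q),D0)) + (c ((p+1,q),D1) - D ((p+1,q),D1)) + (c ((p,q+1),D2) - D ((p,q+1),D2))"
        using z by (simp add: algebra_simps)
      also have "cmod \<dots> < 3 * \<delta>" using D(2)[rule_format, of "((p,q),D0)"] D(2)[rule_format, of "((p+1,q),D1)"] D(2)[rule_format, of "((p,q+1),D2)"]
          norm3[of "c ((p,q),D0) - D ((p,q),D0)" "c ((p+1,q),D1) - D ((p+1,q),D1)" "c ((p,q+1),D2) - D ((p,q+1),D2)"]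
        by linarith
      finally show "cmod (c ((p,q),D0) + c ((p+1,q),D1) + c ((p,q+1),D2)) < 3 * \<delta>" .
    qed
  qed
  have lc: "(\<lambda>e. (cmod (c e))\<^sup>2) summable_on UNIV"
  proof -
    have "(cmod (c e))\<^sup>2 * P \<le> (LINT x:{0..1}|lborel. (cmod (fst f e x))\<^sup>2)" for e
      using projf[of e 0] S_nn[of e] by simp
    then have "(\<lambda>e. (cmod (c e))\<^sup>2 * P) summable_on UNIV"
      by (intro summable_on_comparison_test[OF sf]) (use P_pos in auto)
    then show ?thesis using summable_on_cmult_left'[of P "\<lambda>e. (cmod (c e))\<^sup>2"] P_pos by simp
  qed
  have "Hnorm2 m (state_diff f (st c)) = A + m * Bv"
    unfolding Hnorm2_def state_diff_def st_def A_def Bv_def S_def by simp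
  then have H0: "Hnorm2 m (state_diff f (st c)) = 0" using AB0 by simp
  have E0: "is_eigenfunction a kinv m q0 lam (st c)" by (rule eig_of[OF dc lc])
  show ?thesis by (rule exI[of _ "st c"]) (rule conjI[OF E0 H0])
qed

end

definition psum :: "(int \<Rightarrow> complex) \<Rightarrow> int \<Rightarrow> complex" where
  "psum f i = (if i \<ge> 0 then (\<Sum>k\<in>{1..i}. f k) else - (\<Sum>k\<in>{i+1..0}. f k))"

lemma psum_step: "psum f i - psum f (i - 1) = f i"
proof (cases "i \<ge> 1")
  case True
  have "{1..i} = insert i {1..i-1}" using True by auto
  then have "(\<Sum>k\<in>{1..i}. f k) = f i + (\<Sum>k\<in>{1..i-1}. f k)" by simp
  then show ?thesis using True by (simp add: psum_def)
next
  case False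
  then have i: "i \<le> 0" by simp
  have "{i..0} = insert i {i+1..0}" using i by auto
  then have "(\<Sum>k\<in>{i..0}. f k) = f i + (\<Sum>k\<in>{i+1..0}. f k)" by simp
  moreover have "psum f (i - 1) = - (\<Sum>k\<in>{i..0}. f k)" using i by (simp add: psum_def)
  moreover have "psum f i = (if i = 0 then 0 else - (\<Sum>k\<in>{i+1..0}. f k))" using i by (simp add: psum_def)
  ultimately show ?thesis using i by auto
qed

lemma psum_0: "psum f 0 = 0" by (simp add: psum_def)

lemma int_zero_diff:
  fixes g :: "int \<Rightarrow> complex"
  assumes "g 0 = 0" "\<And>i. g i - g (i - 1) = 0"
  shows "g i = 0"
proof (induction i rule: int_induct[where k=0])
  case base then show ?case using assms(1) by simp
next
  case (step1 i) then show ?case using assms(2)[of "i+1"] by simp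
next
  case (step2 i) then show ?case using assms(2)[of i] by simp
qed

lemma stream:
  assumes d: "divfree c"
  shows "\<exists>\<psi>. \<forall>e. Dop \<psi> e = c e"
proof -
  have A: "\<And>p q. c ((p,q),D0) + c ((p,q),D1) + c ((p,q),D2) = 0"
    and B: "\<And>p q. c ((p,q),D0) + c ((p+1,q),D1) + c ((p,q+1),D2) = 0"
    using d unfolding divfree_def by blast+
  define V where "V = psum (\<lambda>j. c ((1,j-1),D1))"
  define H where "H i j = psum (\<lambda>k. c ((k,j),D2)) i" for i j
  define \<psi> where "\<psi> z = V (snd z) - H (fst z) (snd z)" for z
  have e2: "Dop \<psi> ((p,q),D2) = c ((p,q),D2)" for p q
    using psum_step[of "\<lambda>k. c ((k,q),D2)" p] by (simp add: Dop_simps \<psi>_def H_def)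
  have e1: "Dop \<psi> ((p,q),D1) = c ((p,q),D1)" for p q
  proof -
    define g where "g i = c ((i+1,q),D1) - c ((1,q),D1) + H i (q+1) - H i q" for i
    have g0: "g 0 = 0" by (simp add: g_def H_def psum_0)
    have gs: "g i - g (i - 1) = 0" for i
    proof -
      have h1: "H i (q+1) - H (i-1) (q+1) = c ((i,q+1),D2)" using psum_step by (simp add: H_def)
      have h2: "H i q - H (i-1) q = c ((i,q),D2)" using psum_step by (simp add: H_def)
      have "g i - g (i - 1) = c ((i+1,q),D1) - c ((i,q),D1) + (H i (q+1) - H (i-1) (q+1)) - (H i q - H (i-1) q)"
        by (simp add: g_def algebra_simps)
      also have "\<dots> = c ((i+1,q),D1) - c ((i,q),D1) + c ((i,q+1),D2) - c ((i,q),D2)" using h1 h2 by simp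
      also have "\<dots> = (c ((i,q),D0) + c ((i+1,q),D1) + c ((i,q+1),D2)) - (c ((i,q),D0) + c ((i,q),D1) + c ((i,q),D2))"
        by (simp add: algebra_simps)
      also have "\<dots> = 0" using A[of i q] B[of i q] by simp
      finally show ?thesis .
    qed
    have "g (p - 1) = 0" by (rule int_zero_diff[OF g0 gs])
    moreover have "V (q+1) - V q = c ((1,q),D1)" using psum_step[of "\<lambda>j. c ((1,j-1),D1)" "q+1"] by (simp add: V_def)
    ultimately show ?thesis by (simp add: Dop_simps \<psi>_def g_def algebra_simps)
  qed
  have e0: "Dop \<psi> ((p,q),D0) = c ((p,q),D0)" for p q
  proof -
    have "Dop \<psi> ((p,q),D0) = - Dop \<psi> ((p,q),D1) - Dop \<psi> ((p,q),D2)" by (simp add: Dop_simps)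
    also have "\<dots> = - c ((p,q),D1) - c ((p,q),D2)" using e1 e2 by simp
    also have "\<dots> = c ((p,q),D0)" using A[of p q] by (auto simp: complex_eq_iff)
    finally show ?thesis .
  qed
  have "Dop \<psi> e = c e" for e
  proof -
    obtain p q d where e: "e = ((p,q),d)" by (metis prod.collapse)
    show ?thesis unfolding e by (cases d) (simp_all add: e0 e1 e2)
  qed
  then show ?thesis by blast
qed

lemma tail_small:
  fixes f :: "'a \<Rightarrow> real"
  assumes s: "f summable_on UNIV" and nn: "\<And>x. f x \<ge> 0" and eps: "\<epsilon> > 0"
  shows "\<exists>F. finite F \<and> infsum f (- F) < \<epsilon>"
proof -
  obtain F where F: "finite F" "dist (sum f F) (infsum f UNIV) \<le> \<epsilon> / 2"
    using infsum_finite_approximation[OF s, of "\<epsilon>/2"] eps by auto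
  have "infsum f (- F) = infsum f UNIV - infsum f F"
    using infsum_Diff[OF s summable_on_subset_banach[OF s], of F] by (simp add: Compl_eq_Diff_UNIV)
  also have "infsum f F = sum f F" by (rule infsum_finite[OF F(1)])
  finally have "infsum f (- F) = infsum f UNIV - sum f F" .
  moreover have "\<bar>sum f F - infsum f UNIV\<bar> \<le> \<epsilon> / 2" using F(2) by (simp add: dist_real_def)
  then have "- (sum f F - infsum f UNIV) \<le> \<epsilon> / 2" by (rule abs_le_D2)
  ultimately have "infsum f (- F) \<le> \<epsilon> / 2" by linarith
  then show ?thesis using F(1) eps by (intro exI[of _ F]) auto
qed

definition clmp :: "real \<Rightarrow> real \<Rightarrow> real" where "clmp M t = max (- M) (min M t)"
definition trunc :: "real \<Rightarrow> complex \<Rightarrow> complex" where "trunc M z = Complex (clmp M (Re z)) (clmp M (Im z))"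

lemma clmp_lip: "\<bar>clmp M s - clmp M t\<bar> \<le> \<bar>s - t\<bar>"
  unfolding clmp_def by linarith

lemma sq_abs_mono: "\<bar>a\<bar> \<le> \<bar>b::real\<bar> \<Longrightarrow> a\<^sup>2 \<le> b\<^sup>2"
  using power_mono[of "\<bar>a\<bar>" "\<bar>b\<bar>" 2] by simp

lemma trunc_lip: "cmod (trunc M z - trunc M w) \<le> cmod (z - w)"
proof -
  have "(cmod (trunc M z - trunc M w))\<^sup>2 = (clmp M (Re z) - clmp M (Re w))\<^sup>2 + (clmp M (Im z) - clmp M (Im w))\<^sup>2"
    by (simp add: trunc_def cmod_power2)
  also have "\<dots> \<le> (Re z - Re w)\<^sup>2 + (Im z - Im w)\<^sup>2"
    by (intro add_mono sq_abs_mono clmp_lip)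
  also have "\<dots> = (cmod (z - w))\<^sup>2" by (simp add: cmod_power2)
  finally show ?thesis by (rule power2_le_imp_le) simp
qed

lemma trunc_id: "cmod z \<le> M \<Longrightarrow> trunc M z = z"
proof -
  assume h: "cmod z \<le> M"
  have "\<bar>Re z\<bar> \<le> M" "\<bar>Im z\<bar> \<le> M" using abs_Re_le_cmod[of z] abs_Im_le_cmod[of z] h by linarith+
  then show ?thesis by (simp add: trunc_def clmp_def complex_eq_iff)
qed

lemma trunc_bound: "M \<ge> 0 \<Longrightarrow> cmod (trunc M z) \<le> 2 * M"
proof -
  assume M: "M \<ge> 0"
  have "\<bar>clmp M t\<bar> \<le> M" for t unfolding clmp_def using M by linarith
  then show ?thesis using cmod_le[of "trunc M z"] by (simp add: trunc_def) (smt (verit))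
qed

lemma Dop_bound_lip:
  "cmod (Dop (\<lambda>z. \<psi> z - trunc M (\<psi> z)) e) \<le> 2 * cmod (Dop \<psi> e)"
proof -
  have "Dop (\<lambda>z. \<psi> z - trunc M (\<psi> z)) e = Dop \<psi> e - (trunc M (\<psi> (fst (ends e))) - trunc M (\<psi> (snd (ends e))))"
    by (simp add: Dop_def algebra_simps)
  also have "cmod \<dots> \<le> cmod (Dop \<psi> e) + cmod (trunc M (\<psi> (fst (ends e))) - trunc M (\<psi> (snd (ends e))))"
    by (rule norm_triangle_ineq4)
  also have "\<dots> \<le> cmod (Dop \<psi> e) + cmod (Dop \<psi> e)"
    using trunc_lip[of M "\<psi> (fst (ends e))" "\<psi> (snd (ends e))"] by (simp add: Dop_def)
  finally show ?thesis by simp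
qed

lemma trunc_approx:
  assumes s: "(\<lambda>e. (cmod (Dop \<psi> e))\<^sup>2) summable_on UNIV" and eps: "\<epsilon> > 0"
  shows "\<exists>M>0. (\<lambda>e. (cmod (Dop (\<lambda>z. \<psi> z - trunc M (\<psi> z)) e))\<^sup>2) summable_on UNIV \<and>
              (\<Sum>\<^sub>\<infinity>e. (cmod (Dop (\<lambda>z. \<psi> z - trunc M (\<psi> z)) e))\<^sup>2) < \<epsilon>"
proof -
  have s4: "(\<lambda>e. 4 * (cmod (Dop \<psi> e))\<^sup>2) summable_on UNIV" using s by (rule summable_on_cmult_right)
  obtain F where F: "finite F" "(\<Sum>\<^sub>\<infinity>e\<in>-F. 4 * (cmod (Dop \<psi> e))\<^sup>2) < \<epsilon>"
    using tail_small[OF s4 _ eps] by auto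
  define M where "M = 1 + (\<Sum>e\<in>F. cmod (\<psi> (fst (ends e))) + cmod (\<psi> (snd (ends e))))"
  have Mpos: "M > 0" unfolding M_def by (smt (verit) sum_nonneg norm_ge_zero)
  have le: "cmod (\<psi> (fst (ends e))) \<le> M \<and> cmod (\<psi> (snd (ends e))) \<le> M" if "e \<in> F" for e
  proof -
    have "cmod (\<psi> (fst (ends e))) + cmod (\<psi> (snd (ends e))) \<le> (\<Sum>e\<in>F. cmod (\<psi> (fst (ends e))) + cmod (\<psi> (snd (ends e))))"
      by (rule member_le_sum[OF that _ F(1)]) auto
    then show ?thesis unfolding M_def using norm_ge_zero by (smt (verit))
  qed
  define g where "g e = (cmod (Dop (\<lambda>z. \<psi> z - trunc M (\<psi> z)) e))\<^sup>2" for e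
  have g0: "g e = 0" if "e \<in> F" for e
    using le[OF that] by (simp add: g_def Dop_def trunc_id)
  have gb: "g e \<le> 4 * (cmod (Dop \<psi> e))\<^sup>2" for e
  proof -
    have "g e \<le> (2 * cmod (Dop \<psi> e))\<^sup>2" unfolding g_def by (rule power_mono[OF Dop_bound_lip]) simp
    then show ?thesis by (simp add: power_mult_distrib)
  qed
  have sg: "g summable_on UNIV"
  proof (rule summable_on_comparison_test[OF s4])
    show "\<And>x. x \<in> UNIV \<Longrightarrow> g x \<le> 4 * (cmod (Dop \<psi> x))\<^sup>2" using gb by blast
    show "\<And>x. x \<in> UNIV \<Longrightarrow> 0 \<le> g x" by (simp add: g_def)
  qed
  have "infsum g UNIV = infsum g (- F)" by (rule infsum_cong_neutral) (auto simp: g0)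
  also have "\<dots> \<le> (\<Sum>\<^sub>\<infinity>e\<in>-F. 4 * (cmod (Dop \<psi> e))\<^sup>2)"
    by (rule infsum_mono[OF summable_on_subset_banach[OF sg] summable_on_subset_banach[OF s4]]) (auto simp: gb)
  finally have "infsum g UNIV < \<epsilon>" using F(2) by simp
  then show ?thesis using sg Mpos unfolding g_def by blast
qed

definition rad :: "int \<times> int \<Rightarrow> nat" where "rad z = nat (max \<bar>fst z\<bar> \<bar>snd z\<bar>)"

lemma rad_near: "\<bar>fst z - fst w\<bar> \<le> 1 \<Longrightarrow> \<bar>snd z - snd w\<bar> \<le> 1 \<Longrightarrow> rad z \<le> rad w + 1"
  unfolding rad_def by (cases z, cases w) (simp, arith)

lemma ends_near:
  fixes p q :: int
  shows "\<bar>fst (fst (ends ((p,q),d))) - p\<bar> \<le> 1 \<and> \<bar>snd (fst (ends ((p,q),d))) - q\<bar> \<le> 1 \<and>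
         \<bar>fst (snd (ends ((p,q),d))) - p\<bar> \<le> 1 \<and> \<bar>snd (snd (ends ((p,q),d))) - q\<bar> \<le> 1 \<and>
         \<bar>fst (fst (ends ((p,q),d))) - fst (snd (ends ((p,q),d)))\<bar> \<le> 1 \<and>
         \<bar>snd (fst (ends ((p,q),d))) - snd (snd (ends ((p,q),d)))\<bar> \<le> 1"
  by (cases d) (auto simp: ends_def)

lemma ends_rad:
  fixes e :: edge
  defines "r1 \<equiv> rad (fst (ends e))" and "r2 \<equiv> rad (snd (ends e))" and "r \<equiv> rad (fst e)"
  shows "r1 \<le> r2 + 1" "r2 \<le> r1 + 1" "r \<le> r1 + 1" "r \<le> r2 + 1"
proof -
  obtain p q d where e: "e = ((p,q),d)" by (metis prod.collapse)
  note n = ends_near[of p q d]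
  show "r1 \<le> r2 + 1" unfolding r1_def r2_def e by (rule rad_near) (use n in auto)
  show "r2 \<le> r1 + 1" unfolding r1_def r2_def e by (rule rad_near) (use n in \<open>auto simp: abs_minus_commute\<close>)
  show "r \<le> r1 + 1" unfolding r1_def r_def e by (rule rad_near) (use n in \<open>auto simp: abs_minus_commute\<close>)
  show "r \<le> r2 + 1" unfolding r2_def r_def e by (rule rad_near) (use n in \<open>auto simp: abs_minus_commute\<close>)
qed

lemma card_2_le: "card {x, y} \<le> 2"
  by (simp add: card_insert_if)

lemma card_shell: "finite {z::int\<times>int. rad z = r} \<and> card {z::int\<times>int. rad z = r} \<le> 8 * r + 4"
proof -
  define A where "A = ({int r, - int r} \<times> {- int r..int r})"
  define B where "B = ({- int r..int r} \<times> {int r, - int r})"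
  have sub: "{z::int\<times>int. rad z = r} \<subseteq> A \<union> B"
  proof
    fix z :: "int \<times> int" assume "z \<in> {z. rad z = r}"
    then have h: "nat (max \<bar>fst z\<bar> \<bar>snd z\<bar>) = r" by (simp add: rad_def)
    obtain p q where z: "z = (p,q)" by fastforce
    have m: "max \<bar>p\<bar> \<bar>q\<bar> = int r" using h unfolding z by simp
    have "(\<bar>p\<bar> = int r \<and> \<bar>q\<bar> \<le> int r) \<or> (\<bar>q\<bar> = int r \<and> \<bar>p\<bar> \<le> int r)"
      using m by (simp add: max_def split: if_splits)
    then show "z \<in> A \<union> B"
    proof
      assume a: "\<bar>p\<bar> = int r \<and> \<bar>q\<bar> \<le> int r"
      then have "p \<in> {int r, - int r}" "q \<in> {- int r..int r}" by (auto simp: abs_if split: if_splits)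
      then show ?thesis unfolding z A_def by blast
    next
      assume a: "\<bar>q\<bar> = int r \<and> \<bar>p\<bar> \<le> int r"
      then have "q \<in> {int r, - int r}" "p \<in> {- int r..int r}" by (auto simp: abs_if split: if_splits)
      then show ?thesis unfolding z B_def by blast
    qed
  qed
  have fA: "finite A" "finite B" by (simp_all add: A_def B_def)
  have cA: "card A \<le> 2 * (2 * r + 1)"
  proof -
    have "card A = card {int r, - int r} * card {- int r..int r}" unfolding A_def by (rule card_cartesian_product)
    also have "card {int r, - int r} \<le> 2" by (rule card_2_le)
    then have "card {int r, - int r} * card {- int r..int r} \<le> 2 * card {- int r..int r}" by simp
    also have "card {- int r..int r} = 2 * r + 1" by simp
    finally show ?thesis .
  qed
  have cB: "card B \<le> 2 * (2 * r + 1)"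
  proof -
    have "card B = card {- int r..int r} * card {int r, - int r}" unfolding B_def by (rule card_cartesian_product)
    also have "card {int r, - int r} \<le> 2" by (rule card_2_le)
    then have "card {- int r..int r} * card {int r, - int r} \<le> card {- int r..int r} * 2" by simp
    also have "card {- int r..int r} = 2 * r + 1" by simp
    finally show ?thesis by simp
  qed
  have "card {z::int\<times>int. rad z = r} \<le> card (A \<union> B)" by (rule card_mono) (use fA sub in auto)
  also have "\<dots> \<le> card A + card B" by (rule card_Un_le)
  also have "card A + card B \<le> 8 * r + 4" using cA cB by simp
  finally have "card {z::int\<times>int. rad z = r} \<le> 8 * r + 4" .
  moreover have "finite {z::int\<times>int. rad z = r}" by (rule finite_subset[OF sub]) (use fA in auto)
  ultimately show ?thesis by blast
qed

lemma finite_box: "finite {z::int\<times>int. rad z \<le> L}"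
proof (rule finite_subset)
  show "{z::int\<times>int. rad z \<le> L} \<subseteq> {- int L..int L} \<times> {- int L..int L}"
    by (auto simp: rad_def)
qed simp

lemma UNIV_dir: "(UNIV :: dir set) = {D0, D1, D2}"
  using dir.exhaust by auto

lemma finite_dir: "finite (UNIV :: dir set)" by (simp add: UNIV_dir)
lemma card_dir: "card (UNIV :: dir set) = 3" by (simp add: UNIV_dir)

definition clamp01 :: "real \<Rightarrow> real" where "clamp01 t = max 0 (min 1 t)"

lemma clamp01_lip: "\<bar>clamp01 s - clamp01 t\<bar> \<le> \<bar>s - t\<bar>" unfolding clamp01_def by linarith
lemma clamp01_mono: "s \<le> t \<Longrightarrow> clamp01 s \<le> clamp01 t" unfolding clamp01_def by linarith
lemma clamp01_range: "0 \<le> clamp01 t" "clamp01 t \<le> 1" unfolding clamp01_def by linarith+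

definition Gc :: "nat \<Rightarrow> nat \<Rightarrow> nat \<Rightarrow> real" where
  "Gc R L n = clamp01 ((harm L - harm n) / (harm L - harm R))"

context
  fixes R L :: nat
  assumes RL: "R < L"
begin

definition \<Delta> where "\<Delta> = (harm L - harm R :: real)"

lemma Delta_pos: "\<Delta> > 0"
proof -
  have "harm (Suc R) \<le> (harm L :: real)" using RL by (intro harm_mono) simp
  moreover have "harm (Suc R) > (harm R :: real)" by (simp add: harm_Suc)
  ultimately show ?thesis unfolding \<Delta>_def by simp
qed

lemma G1: "n \<le> R \<Longrightarrow> Gc R L n = 1"
proof -
  assume "n \<le> R"
  then have "harm n \<le> (harm R :: real)" by (rule harm_mono)
  then have "(harm L - harm n) / (harm L - harm R) \<ge> (1::real)"
    using Delta_pos unfolding \<Delta>_def by (simp add: field_simps)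
  then show ?thesis unfolding Gc_def clamp01_def by simp
qed

lemma G0: "L \<le> n \<Longrightarrow> Gc R L n = 0"
proof -
  assume "L \<le> n"
  then have "harm L \<le> (harm n :: real)" by (rule harm_mono)
  then have "(harm L - harm n) / (harm L - harm R) \<le> (0::real)"
    using Delta_pos unfolding \<Delta>_def by (simp add: divide_nonpos_pos)
  then show ?thesis unfolding Gc_def clamp01_def by simp
qed

lemma Grange: "0 \<le> Gc R L n" "Gc R L n \<le> 1" unfolding Gc_def by (rule clamp01_range)+

lemma Gstep: "\<bar>Gc R L n - Gc R L (Suc n)\<bar> \<le> 1 / ((real n + 1) * \<Delta>)"
proof -
  have "\<bar>Gc R L n - Gc R L (Suc n)\<bar> \<le> \<bar>(harm L - harm n) / \<Delta> - (harm L - harm (Suc n)) / \<Delta>\<bar>"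
    unfolding Gc_def \<Delta>_def by (rule clamp01_lip)
  also have "(harm L - harm n) / \<Delta> - (harm L - harm (Suc n)) / \<Delta> = (harm (Suc n) - harm n) / \<Delta>"
    by (simp add: diff_divide_distrib)
  also have "harm (Suc n) - harm n = (1 / (real n + 1) :: real)" by (simp add: harm_Suc inverse_eq_divide)
  finally show ?thesis using Delta_pos by (simp add: abs_div_pos)
qed

lemma Gnear:
  assumes "r1 \<le> r2 + 1" "r2 \<le> r1 + 1"
  shows "\<bar>Gc R L r1 - Gc R L r2\<bar> \<le> 1 / ((real (min r1 r2) + 1) * \<Delta>)"
proof -
  consider "r1 = r2" | "r2 = Suc r1" | "r1 = Suc r2" using assms by linarith
  then show ?thesis
  proof cases
    case 1 then show ?thesis using Delta_pos by simp
  next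
    case 2 then show ?thesis using Gstep[of r1] by simp
  next
    case 3 then show ?thesis using Gstep[of r2] by (simp add: abs_minus_commute)
  qed
qed


definition chi where "chi z = Gc R L (rad z)"

lemma chi_edge:
  "(Dop chi e)\<^sup>2 \<le> (if rad (fst e) \<le> L then 4 / ((real (rad (fst e)) + 1)\<^sup>2 * \<Delta>\<^sup>2) else 0)"
proof -
  define r1 where "r1 = rad (fst (ends e))"
  define r2 where "r2 = rad (snd (ends e))"
  define r where "r = rad (fst e)"
  have h: "r1 \<le> r2 + 1" "r2 \<le> r1 + 1" "r \<le> r1 + 1" "r \<le> r2 + 1"
    using ends_rad[of e] unfolding r1_def r2_def r_def by auto
  have D: "Dop chi e = Gc R L r1 - Gc R L r2" by (simp add: Dop_def chi_def r1_def r2_def)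
  show ?thesis
  proof (cases "r \<le> L")
    case True
    have mm: "r \<le> min r1 r2 + 1" using h by (simp add: min_def)
    then have "real r \<le> real (min r1 r2) + 1" by (metis of_nat_1 of_nat_add of_nat_le_iff)
    then have m: "real r + 1 \<le> 2 * (real (min r1 r2) + 1)" by simp
    have x: "0 < (real (min r1 r2) + 1) * \<Delta>" and y: "0 < (real r + 1) * \<Delta>" using Delta_pos by simp_all
    have yx: "(real r + 1) * \<Delta> \<le> 2 * ((real (min r1 r2) + 1) * \<Delta>)"
      using mult_right_mono[OF m less_imp_le[OF Delta_pos]] by (simp add: algebra_simps)
    have "\<bar>Dop chi e\<bar> \<le> 1 / ((real (min r1 r2) + 1) * \<Delta>)" unfolding D by (rule Gnear[OF h(1,2)])
    also have "\<dots> = 2 / (2 * ((real (min r1 r2) + 1) * \<Delta>))" by simp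
    also have "\<dots> \<le> 2 / ((real r + 1) * \<Delta>)"
      by (rule divide_left_mono[OF yx]) (use x y in auto)
    finally have b: "\<bar>Dop chi e\<bar> \<le> 2 / ((real r + 1) * \<Delta>)" .
    have "(Dop chi e)\<^sup>2 \<le> (2 / ((real r + 1) * \<Delta>))\<^sup>2"
      using b by (metis abs_ge_zero order_trans power2_abs power_mono)
    also have "\<dots> = 4 / ((real r + 1)\<^sup>2 * \<Delta>\<^sup>2)" by (simp add: power_divide power_mult_distrib)
    finally show ?thesis using True by (simp add: r_def)
  next
    case False
    then have "L \<le> r1" "L \<le> r2" using h by linarith+
    then have "Dop chi e = 0" unfolding D using G0 by simp
    then show ?thesis using False by (simp add: r_def)
  qed
qed

lemma chi_support: "finite {z. chi z \<noteq> 0}"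
proof (rule finite_subset[OF _ finite_box[of L]])
  show "{z. chi z \<noteq> 0} \<subseteq> {z. rad z \<le> L}"
  proof
    fix z assume "z \<in> {z. chi z \<noteq> 0}"
    then have "Gc R L (rad z) \<noteq> 0" by (simp add: chi_def)
    then have "\<not> L \<le> rad z" using G0 by blast
    then show "z \<in> {z. rad z \<le> L}" by simp
  qed
qed

lemma chi_edge_zero: "rad (fst e) > L \<Longrightarrow> Dop chi e = 0"
  using chi_edge[of e] by simp

definition Ebox where "Ebox = {z. rad z \<le> L} \<times> (UNIV :: dir set)"

lemma Ebox_finite: "finite Ebox" unfolding Ebox_def using finite_box finite_dir by simp

lemma out_Ebox: "e \<notin> Ebox \<Longrightarrow> (Dop chi e)\<^sup>2 = 0"
proof -
  assume "e \<notin> Ebox"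
  then have "rad (fst e) > L" by (cases e) (auto simp: Ebox_def)
  then show ?thesis using chi_edge_zero by simp
qed

lemma chi_energy_sum: "(\<Sum>\<^sub>\<infinity>e. (Dop chi e)\<^sup>2) = (\<Sum>e\<in>Ebox. (Dop chi e)\<^sup>2)"
proof -
  have "(\<Sum>\<^sub>\<infinity>e. (Dop chi e)\<^sup>2) = (\<Sum>\<^sub>\<infinity>e\<in>Ebox. (Dop chi e)\<^sup>2)"
    by (rule infsum_cong_neutral) (auto simp: out_Ebox)
  also have "\<dots> = (\<Sum>e\<in>Ebox. (Dop chi e)\<^sup>2)" by (rule infsum_finite[OF Ebox_finite])
  finally show ?thesis .
qed

lemma chi_summable: "(\<lambda>e. (Dop chi e)\<^sup>2) summable_on UNIV"
  by (rule summable_fin[OF Ebox_finite]) (simp add: out_Ebox)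

definition Vr where "Vr r = 4 / ((real r + 1)\<^sup>2 * \<Delta>\<^sup>2)"

lemma chi_energy: "(\<Sum>\<^sub>\<infinity>e. (Dop chi e)\<^sup>2) \<le> 96 * harm (Suc L) / \<Delta>\<^sup>2"
proof -
  have Vnn: "Vr r \<ge> 0" for r by (simp add: Vr_def)
  have "(\<Sum>e\<in>Ebox. (Dop chi e)\<^sup>2) \<le> (\<Sum>e\<in>Ebox. Vr (rad (fst e)))"
  proof (rule sum_mono)
    fix e assume "e \<in> Ebox"
    then have "rad (fst e) \<le> L" by (cases e) (auto simp: Ebox_def)
    then show "(Dop chi e)\<^sup>2 \<le> Vr (rad (fst e))" using chi_edge[of e] by (simp add: Vr_def)
  qed
  also have "\<dots> = (\<Sum>z\<in>{z. rad z \<le> L}. \<Sum>d\<in>(UNIV::dir set). Vr (rad z))"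
    unfolding Ebox_def by (simp only: sum.cartesian_product split_def)
  also have "\<dots> = 3 * (\<Sum>z\<in>{z. rad z \<le> L}. Vr (rad z))" by (simp add: card_dir sum_distrib_left)
  also have "(\<Sum>z\<in>{z. rad z \<le> L}. Vr (rad z)) = (\<Sum>r\<in>{..L}. \<Sum>z\<in>{z \<in> {z. rad z \<le> L}. rad z = r}. Vr (rad z))"
    by (rule sum.group[symmetric]) (auto simp: finite_box)
  also have "\<dots> \<le> (\<Sum>r\<in>{..L}. 32 / ((real r + 1) * \<Delta>\<^sup>2))"
  proof (rule sum_mono)
    fix r assume r: "r \<in> {..L}"
    have "{z \<in> {z. rad z \<le> L}. rad z = r} = {z. rad z = r}" using r by auto
    then have "(\<Sum>z\<in>{z \<in> {z. rad z \<le> L}. rad z = r}. Vr (rad z)) = real (card {z::int\<times>int. rad z = r}) * Vr r"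
      by simp
    also have "\<dots> \<le> real (8 * r + 4) * Vr r"
      using card_shell[of r] Vnn by (intro mult_right_mono) auto
    also have "\<dots> \<le> 32 / ((real r + 1) * \<Delta>\<^sup>2)"
    proof -
      have "real (8 * r + 4) * Vr r = (8 * real r + 4) * 4 / ((real r + 1)\<^sup>2 * \<Delta>\<^sup>2)" by (simp add: Vr_def)
      also have "\<dots> \<le> (8 * (real r + 1)) * 4 / ((real r + 1)\<^sup>2 * \<Delta>\<^sup>2)"
        using Delta_pos by (intro divide_right_mono mult_right_mono) auto
      also have "\<dots> = ((real r + 1) * 32) / ((real r + 1) * ((real r + 1) * \<Delta>\<^sup>2))"
        by (simp add: power2_eq_square algebra_simps)
      also have "\<dots> = 32 / ((real r + 1) * \<Delta>\<^sup>2)" by (rule mult_divide_mult_cancel_left) simp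
      finally show ?thesis .
    qed
    finally show "(\<Sum>z\<in>{z \<in> {z. rad z \<le> L}. rad z = r}. Vr (rad z)) \<le> 32 / ((real r + 1) * \<Delta>\<^sup>2)" .
  qed
  also have "(\<Sum>r\<in>{..L}. 32 / ((real r + 1) * \<Delta>\<^sup>2)) = 32 / \<Delta>\<^sup>2 * (\<Sum>r\<in>{..L}. 1 / (real r + 1))"
    unfolding sum_distrib_left by (rule sum.cong) simp_all
  also have "(\<Sum>r\<in>{..L}. 1 / (real r + 1)) = harm (Suc L)"
    by (simp add: harm_altdef lessThan_Suc_atMost inverse_eq_divide add.commute)
  finally show ?thesis unfolding chi_energy_sum by (simp add: field_simps)
qed

end

lemma cutoff:
  assumes S: "finite S" and dl: "\<delta> > 0"
  shows "\<exists>ch :: int \<times> int \<Rightarrow> real. (\<forall>z. 0 \<le> ch z \<and> ch z \<le> 1) \<and> (\<forall>z\<in>S. ch z = 1) \<and> finite {z. ch z \<noteq> 0} \<and>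
      (\<lambda>e. (Dop ch e)\<^sup>2) summable_on UNIV \<and> (\<Sum>\<^sub>\<infinity>e. (Dop ch e)\<^sup>2) < \<delta>"
proof -
  define R where "R = (\<Sum>z\<in>S. rad z)"
  have RS: "rad z \<le> R" if "z \<in> S" for z unfolding R_def by (rule member_le_sum[OF that _ S]) auto
  define X where "X = harm R + 2 + 192 / \<delta>"
  have "eventually (\<lambda>n. harm n \<ge> harm R + X) sequentially"
    using harm_at_top filterlim_at_top by blast
  then obtain N where N: "\<And>n. n \<ge> N \<Longrightarrow> harm n \<ge> (harm R :: real) + X" by (auto simp: eventually_sequentially)
  define L where "L = max N (Suc R)"
  have RL: "R < L" by (simp add: L_def)
  have HL: "harm L \<ge> (harm R :: real) + X" using N[of L] by (simp add: L_def)
  define D where "D = (harm L - harm R :: real)"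
  have D: "D = \<Delta> R L" by (simp add: \<Delta>_def[OF RL] D_def)
  have Dpos: "D > 0" using Delta_pos[OF RL] D by simp
  have hR: "harm R \<ge> (0::real)" by (rule harm_nonneg)
  have p192: "192 / \<delta> > 0" using dl by simp
  have D1: "D \<ge> harm R + 1" and D2: "D > 192 / \<delta>" using HL p192 hR unfolding D_def X_def by linarith+
  have "harm (Suc L) = harm L + inverse (real (Suc L))" by (simp add: harm_Suc)
  also have "inverse (real (Suc L)) \<le> (1::real)" by (simp add: inverse_le_1_iff)
  then have "harm L + inverse (real (Suc L)) \<le> harm L + (1::real)" by simp
  finally have "harm (Suc L) \<le> D + harm R + (1::real)" unfolding D_def by simp
  then have hSL: "harm (Suc L) \<le> 2 * D" using D1 by simp
  have "(\<Sum>\<^sub>\<infinity>e. (Dop (chi R L) e)\<^sup>2) \<le> 96 * harm (Suc L) / D\<^sup>2" using chi_energy[OF RL] D by simp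
  also have "\<dots> \<le> 96 * (2 * D) / D\<^sup>2" using hSL Dpos by (intro divide_right_mono) auto
  also have "\<dots> = 192 / D" using Dpos by (simp add: power2_eq_square)
  also have "\<dots> < \<delta>" using D2 Dpos dl by (simp add: field_simps)
  finally have en: "(\<Sum>\<^sub>\<infinity>e. (Dop (chi R L) e)\<^sup>2) < \<delta>" .
  have "\<forall>z. 0 \<le> chi R L z \<and> chi R L z \<le> 1" using Grange[OF RL] by (simp add: chi_def[OF RL])
  moreover have "\<forall>z\<in>S. chi R L z = 1" using RS G1[OF RL] by (simp add: chi_def[OF RL])
  ultimately show ?thesis using chi_support[OF RL] chi_summable[OF RL] en by blast
qed

lemma sq_diff_bound: "(cmod (x - y))\<^sup>2 \<le> 2 * (cmod x)\<^sup>2 + 2 * (cmod y)\<^sup>2"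
  using sq_lin_bound[of 1 x "-1" y] by simp

lemma sq_add_bound: "(cmod (x + y))\<^sup>2 \<le> 2 * (cmod x)\<^sup>2 + 2 * (cmod y)\<^sup>2"
  using sq_lin_bound[of 1 x 1 y] by simp

lemma prod_approx:
  fixes \<psi> :: "int \<times> int \<Rightarrow> complex"
  assumes bd: "\<And>z. cmod (\<psi> z) \<le> M" and M: "M \<ge> 0"
    and s: "(\<lambda>e. (cmod (Dop \<psi> e))\<^sup>2) summable_on UNIV" and eps: "\<epsilon> > 0"
  shows "\<exists>ch :: int \<times> int \<Rightarrow> real. finite {z. ch z \<noteq> 0} \<and>
     (\<lambda>e. (cmod (Dop (\<lambda>z. \<psi> z - of_real (ch z) * \<psi> z) e))\<^sup>2) summable_on UNIV \<and>
     (\<Sum>\<^sub>\<infinity>e. (cmod (Dop (\<lambda>z. \<psi> z - of_real (ch z) * \<psi> z) e))\<^sup>2) < \<epsilon>"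
proof -
  have s2: "(\<lambda>e. 2 * (cmod (Dop \<psi> e))\<^sup>2) summable_on UNIV" using s by (rule summable_on_cmult_right)
  obtain F where F: "finite F" "(\<Sum>\<^sub>\<infinity>e\<in>-F. 2 * (cmod (Dop \<psi> e))\<^sup>2) < \<epsilon> / 2"
    using tail_small[OF s2 _, of "\<epsilon>/2"] eps by auto
  define S where "S = (\<lambda>e. fst (ends e)) ` F"
  define \<delta> where "\<delta> = \<epsilon> / (4 * (M\<^sup>2 + 1))"
  have Mp: "0 < M\<^sup>2 + 1" by (rule add_nonneg_pos) simp_all
  then have "4 * (M\<^sup>2 + 1) > 0" by (rule mult_pos_pos[rotated]) simp
  then have dpos: "\<delta> > 0" using eps unfolding \<delta>_def by (rule divide_pos_pos[rotated])
  obtain ch :: "int \<times> int \<Rightarrow> real" where ch: "\<forall>z. 0 \<le> ch z \<and> ch z \<le> 1" "\<forall>z\<in>S. ch z = 1"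
    "finite {z. ch z \<noteq> 0}" "(\<lambda>e. (Dop ch e)\<^sup>2) summable_on UNIV" "(\<Sum>\<^sub>\<infinity>e. (Dop ch e)\<^sup>2) < \<delta>"
    using cutoff[OF _ dpos, of S] F(1) unfolding S_def by blast
  define err where "err e = Dop (\<lambda>z. \<psi> z - of_real (ch z) * \<psi> z) e" for e
  define b where "b e = (if e \<in> F then 0 else 2 * (cmod (Dop \<psi> e))\<^sup>2) + 2 * M\<^sup>2 * (Dop ch e)\<^sup>2" for e
  have errb: "(cmod (err e))\<^sup>2 \<le> b e" for e
  proof -
    define z1 where "z1 = fst (ends e)"
    define z2 where "z2 = snd (ends e)"
    have eq: "err e = of_real (1 - ch z1) * Dop \<psi> e - \<psi> z2 * of_real (Dop ch e)"
      by (simp add: err_def Dop_def z1_def z2_def algebra_simps)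
    have "(cmod (err e))\<^sup>2 \<le> 2 * (cmod (of_real (1 - ch z1) * Dop \<psi> e))\<^sup>2 + 2 * (cmod (\<psi> z2 * of_real (Dop ch e)))\<^sup>2"
      unfolding eq by (rule sq_diff_bound)
    also have "(cmod (of_real (1 - ch z1) * Dop \<psi> e))\<^sup>2 \<le> (if e \<in> F then 0 else (cmod (Dop \<psi> e))\<^sup>2)"
    proof (cases "e \<in> F")
      case True
      then have "z1 \<in> S" unfolding S_def z1_def by blast
      then show ?thesis using ch(2) True by simp
    next
      case False
      have "0 \<le> 1 - ch z1" "1 - ch z1 \<le> 1" using ch(1)[rule_format, of z1] by auto
      then have h1: "(1 - ch z1)\<^sup>2 \<le> 1" by (simp add: power_le_one)
      have "(cmod (of_real (1 - ch z1) * Dop \<psi> e))\<^sup>2 = (1 - ch z1)\<^sup>2 * (cmod (Dop \<psi> e))\<^sup>2"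
        by (simp only: norm_mult norm_of_real power_mult_distrib power2_abs)
      also have "\<dots> \<le> 1 * (cmod (Dop \<psi> e))\<^sup>2" by (rule mult_right_mono[OF h1]) simp
      finally show ?thesis using False by simp
    qed
    also have "(cmod (\<psi> z2 * of_real (Dop ch e)))\<^sup>2 \<le> M\<^sup>2 * (Dop ch e)\<^sup>2"
    proof -
      have "(cmod (\<psi> z2))\<^sup>2 \<le> M\<^sup>2" using bd[of z2] by (simp add: power_mono)
      then show ?thesis by (simp add: norm_mult power_mult_distrib mult_right_mono)
    qed
    finally show ?thesis by (cases "e \<in> F") (simp_all add: b_def mult.assoc)
  qed
  define b1 where "b1 e = (if e \<in> F then 0 else 2 * (cmod (Dop \<psi> e))\<^sup>2)" for e
  have sb1: "b1 summable_on UNIV"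
    by (rule summable_on_comparison_test[OF s2]) (auto simp: b1_def)
  have sb2: "(\<lambda>e. 2 * M\<^sup>2 * (Dop ch e)\<^sup>2) summable_on UNIV" using ch(4) by (rule summable_on_cmult_right)
  have bb: "b = (\<lambda>e. b1 e + 2 * M\<^sup>2 * (Dop ch e)\<^sup>2)" by (simp add: b_def b1_def fun_eq_iff)
  have sb: "b summable_on UNIV" unfolding bb using sb1 sb2 by (rule summable_on_add)
  have serr: "(\<lambda>e. (cmod (err e))\<^sup>2) summable_on UNIV"
    by (rule summable_on_comparison_test[OF sb]) (use errb in auto)
  have "infsum b1 UNIV = (\<Sum>\<^sub>\<infinity>e\<in>-F. 2 * (cmod (Dop \<psi> e))\<^sup>2)"
    by (rule infsum_cong_neutral) (auto simp: b1_def)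
  then have i1: "infsum b1 UNIV < \<epsilon> / 2" using F(2) by simp
  have "(\<Sum>\<^sub>\<infinity>e. 2 * M\<^sup>2 * (Dop ch e)\<^sup>2) = 2 * M\<^sup>2 * (\<Sum>\<^sub>\<infinity>e. (Dop ch e)\<^sup>2)" by (rule infsum_cmult_right')
  also have "\<dots> \<le> 2 * M\<^sup>2 * \<delta>" using ch(5) by (intro mult_left_mono) auto
  also have "2 * M\<^sup>2 * \<delta> \<le> \<epsilon> / 2"
  proof -
    have n1: "M\<^sup>2 + 1 \<noteq> 0" using Mp by simp
    have "2 * M\<^sup>2 * \<delta> = \<epsilon> / 2 * (M\<^sup>2 / (M\<^sup>2 + 1))" unfolding \<delta>_def using n1
      by (simp add: divide_simps)
    also have "\<dots> \<le> \<epsilon> / 2 * 1" using eps Mp by (intro mult_left_mono) (simp_all add: divide_le_eq_1)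
    finally show ?thesis by simp
  qed
  finally have i2: "(\<Sum>\<^sub>\<infinity>e. 2 * M\<^sup>2 * (Dop ch e)\<^sup>2) \<le> \<epsilon> / 2" .
  have "(\<Sum>\<^sub>\<infinity>e. (cmod (err e))\<^sup>2) \<le> infsum b UNIV"
    by (rule infsum_mono[OF serr sb]) (use errb in auto)
  also have "infsum b UNIV = infsum b1 UNIV + (\<Sum>\<^sub>\<infinity>e. 2 * M\<^sup>2 * (Dop ch e)\<^sup>2)"
    unfolding bb by (rule infsum_add[OF sb1 sb2])
  finally have "(\<Sum>\<^sub>\<infinity>e. (cmod (err e))\<^sup>2) < \<epsilon>" using i1 i2 by linarith
  then show ?thesis using ch(3) serr unfolding err_def by blast
qed


lemma Dop_diff: "Dop (\<lambda>z. f z - g z) e = Dop f e - Dop g e"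
  by (simp add: Dop_def algebra_simps)

lemma approx_stream:
  assumes dc: "divfree c" and lc: "(\<lambda>e. (cmod (c e))\<^sup>2) summable_on UNIV" and eps: "\<epsilon> > 0"
  shows "\<exists>\<psi>'. finite {z. \<psi>' z \<noteq> 0} \<and> (\<Sum>\<^sub>\<infinity>e. (cmod (c e - Dop \<psi>' e))\<^sup>2) < \<epsilon>"
proof -
  obtain \<psi> where \<psi>: "\<And>e. Dop \<psi> e = c e" using stream[OF dc] by blast
  have s: "(\<lambda>e. (cmod (Dop \<psi> e))\<^sup>2) summable_on UNIV" using lc by (simp add: \<psi>)
  have e4: "\<epsilon> / 4 > 0" using eps by simp
  obtain M where M: "M > 0" "(\<lambda>e. (cmod (Dop (\<lambda>z. \<psi> z - trunc M (\<psi> z)) e))\<^sup>2) summable_on UNIV"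
    "(\<Sum>\<^sub>\<infinity>e. (cmod (Dop (\<lambda>z. \<psi> z - trunc M (\<psi> z)) e))\<^sup>2) < \<epsilon> / 4"
    using trunc_approx[OF s e4] by blast
  define \<psi>0 where "\<psi>0 = (\<lambda>z. \<psi> z - trunc M (\<psi> z))"
  define \<psi>1 where "\<psi>1 = (\<lambda>z. trunc M (\<psi> z))"
  have D01: "Dop \<psi> e = Dop \<psi>0 e + Dop \<psi>1 e" for e by (simp add: Dop_def \<psi>0_def \<psi>1_def)
  have s0: "(\<lambda>e. (cmod (Dop \<psi>0 e))\<^sup>2) summable_on UNIV" using M(2) by (simp add: \<psi>0_def)
  have s1: "(\<lambda>e. (cmod (Dop \<psi>1 e))\<^sup>2) summable_on UNIV"
  proof -
    have "(\<lambda>e. (cmod (1 * Dop \<psi> e + (-1) * Dop \<psi>0 e))\<^sup>2) summable_on UNIV" by (rule l2_lin[OF s s0])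
    moreover have "1 * Dop \<psi> e + (-1) * Dop \<psi>0 e = Dop \<psi>1 e" for e using D01[of e] by simp
    ultimately show ?thesis by simp
  qed
  have b1: "cmod (\<psi>1 z) \<le> 2 * M" for z unfolding \<psi>1_def using M(1) by (intro trunc_bound) simp
  obtain ch :: "int \<times> int \<Rightarrow> real" where ch: "finite {z. ch z \<noteq> 0}"
    "(\<lambda>e. (cmod (Dop (\<lambda>z. \<psi>1 z - of_real (ch z) * \<psi>1 z) e))\<^sup>2) summable_on UNIV"
    "(\<Sum>\<^sub>\<infinity>e. (cmod (Dop (\<lambda>z. \<psi>1 z - of_real (ch z) * \<psi>1 z) e))\<^sup>2) < \<epsilon> / 4"
    using prod_approx[OF b1 _ s1 e4] M(1) by auto
  define \<psi>' where "\<psi>' z = of_real (ch z) * \<psi>1 z" for z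
  have fin: "finite {z. \<psi>' z \<noteq> 0}" by (rule finite_subset[OF _ ch(1)]) (auto simp: \<psi>'_def)
  define E2 where "E2 e = Dop (\<lambda>z. \<psi>1 z - of_real (ch z) * \<psi>1 z) e" for e
  have err: "c e - Dop \<psi>' e = Dop \<psi>0 e + E2 e" for e
    unfolding E2_def \<psi>[symmetric] D01 by (simp add: Dop_def \<psi>'_def algebra_simps)
  have bnd: "(cmod (c e - Dop \<psi>' e))\<^sup>2 \<le> 2 * (cmod (Dop \<psi>0 e))\<^sup>2 + 2 * (cmod (E2 e))\<^sup>2" for e
    unfolding err by (rule sq_add_bound)
  have sE2: "(\<lambda>e. (cmod (E2 e))\<^sup>2) summable_on UNIV" using ch(2) by (simp add: E2_def)
  have sB: "(\<lambda>e. 2 * (cmod (Dop \<psi>0 e))\<^sup>2 + 2 * (cmod (E2 e))\<^sup>2) summable_on UNIV"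
    using s0 sE2 by (intro summable_on_add summable_on_cmult_right)
  have sL: "(\<lambda>e. (cmod (c e - Dop \<psi>' e))\<^sup>2) summable_on UNIV"
    by (rule summable_on_comparison_test[OF sB]) (use bnd in auto)
  have "(\<Sum>\<^sub>\<infinity>e. (cmod (c e - Dop \<psi>' e))\<^sup>2) \<le> (\<Sum>\<^sub>\<infinity>e. 2 * (cmod (Dop \<psi>0 e))\<^sup>2 + 2 * (cmod (E2 e))\<^sup>2)"
    by (rule infsum_mono[OF sL sB]) (use bnd in auto)
  also have "\<dots> = 2 * (\<Sum>\<^sub>\<infinity>e. (cmod (Dop \<psi>0 e))\<^sup>2) + 2 * (\<Sum>\<^sub>\<infinity>e. (cmod (E2 e))\<^sup>2)"
    using s0 sE2 by (simp add: infsum_add summable_on_cmult_right infsum_cmult_right')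
  also have "\<dots> < \<epsilon>"
  proof -
    have "(\<Sum>\<^sub>\<infinity>e. (cmod (Dop \<psi>0 e))\<^sup>2) < \<epsilon> / 4" using M(3) by (simp add: \<psi>0_def)
    moreover have "(\<Sum>\<^sub>\<infinity>e. (cmod (E2 e))\<^sup>2) < \<epsilon> / 4" using ch(3) by (simp add: E2_def)
    ultimately show ?thesis by linarith
  qed
  finally show ?thesis using fin by blast
qed

context setting begin

lemma part2:
  assumes E: "is_eigenfunction a kinv m q0 lam f"
  shows "in_closed_loop_span a kinv m q0 lam f"
  unfolding in_closed_loop_span_def
proof (intro allI impI)
  fix \<epsilon> :: real assume eps: "\<epsilon> > 0"
  obtain c where w0: "\<forall>v. snd f v = 0" and uc: "\<forall>e. \<forall>x\<in>{0..1}. fst f e x = c e * phi x"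
    and dc: "divfree c" and lc: "(\<lambda>e. (cmod (c e))\<^sup>2) summable_on UNIV"
    using eig_struct[OF E] by blast
  have eP: "\<epsilon> / P > 0" using eps P_pos by simp
  obtain \<psi>' where fin: "finite {z. \<psi>' z \<noteq> 0}" and small: "(\<Sum>\<^sub>\<infinity>e. (cmod (c e - Dop \<psi>' e))\<^sup>2) < \<epsilon> / P"
    using approx_stream[OF dc lc eP] by blast
  define S' where "S' = {z. \<psi>' z \<noteq> 0}"
  obtain zs where zs: "set zs = S'" "distinct zs" using finite_distinct_list[OF fin] unfolding S'_def by blast
  define n where "n = length zs"
  define cf where "cf i = \<psi>' (zs ! i)" for i
  define F where "F i = st (hx (zs ! i))" for i
  have loop: "\<forall>i<n. is_loop_state a kinv m q0 lam (F i)"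
  proof (intro allI impI)
    fix i assume "i < n"
    have "is_eigenfunction a kinv m q0 lam (F i)" unfolding F_def
      by (rule eig_of[OF hx_divfree summable_fin[OF hex_finite[of "zs ! i"]]]) (simp add: hx_support)
    moreover have "\<forall>e. e \<notin> hexagon (zs ! i) \<longrightarrow> (\<forall>x\<in>{0..1}. fst (F i) e x = 0)"
      by (simp add: F_def st_def hx_support)
    moreover have "\<forall>v. snd (F i) v = 0" by (simp add: F_def st_def)
    ultimately show "is_loop_state a kinv m q0 lam (F i)" unfolding is_loop_state_def by blast
  qed
  have lsum: "(\<Sum>i<n. cf i * hx (zs ! i) e) = Dop \<psi>' e" for e
  proof -
    have "(\<Sum>i<n. cf i * hx (zs ! i) e) = (\<Sum>z\<in>set zs. \<psi>' z * hx z e)"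
      unfolding n_def cf_def using zs(2)
      by (simp add: sum.distinct_set_conv_list sum_list_sum_nth lessThan_atLeast0)
    also have "\<dots> = Dop \<psi>' e" unfolding zs(1) S'_def by (rule Dop_sum[symmetric, OF fin]) simp
    finally show ?thesis .
  qed
  have lf: "fst (lincomb cf F n) e x = Dop \<psi>' e * phi x" for e x
  proof -
    have "fst (lincomb cf F n) e x = (\<Sum>i<n. cf i * hx (zs ! i) e) * phi x"
      by (simp add: lincomb_def F_def st_def sum_distrib_right mult.assoc)
    then show ?thesis using lsum by simp
  qed
  have ls: "snd (lincomb cf F n) v = 0" for v by (simp add: lincomb_def F_def st_def)
  have "Hnorm2 m (state_diff f (lincomb cf F n)) = (\<Sum>\<^sub>\<infinity>e. (cmod (c e - Dop \<psi>' e))\<^sup>2) * P"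
  proof (rule Hnorm2_st)
    fix e and x :: real assume "x \<in> {0..1}"
    then show "fst (state_diff f (lincomb cf F n)) e x = (c e - Dop \<psi>' e) * phi x"
      using uc[rule_format] lf by (simp add: state_diff_def algebra_simps)
  next
    fix v show "snd (state_diff f (lincomb cf F n)) v = 0" using w0[rule_format, of v] ls[of v] by (simp add: state_diff_def)
  qed
  also have "\<dots> < \<epsilon> / P * P" using small P_pos by (intro mult_strict_right_mono) auto
  also have "\<dots> = \<epsilon>" using P_pos by simp
  finally show "\<exists>n c F. (\<forall>i<n. is_loop_state a kinv m q0 lam (F i)) \<and> Hnorm2 m (state_diff f (lincomb c F n)) < \<epsilon>"
    using loop by blast
qed

end

theorem mainTheorem4:
  fixes a kinv m lam :: real and q0 :: "real \<Rightarrow> real"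
  assumes "a > 0" and "kinv \<ge> 0" and "m \<ge> 0"
    and "set_borel_measurable lborel {0..1} q0"
    and "\<exists>B. AE x in lborel. x \<in> {0..1} \<longrightarrow> \<bar>q0 x\<bar> \<le> B"
    and "AE x in lborel. x \<in> {0..1} \<longrightarrow> q0 x = q0 (1 - x)"
    and "lam \<in> Sigma0 a kinv q0"
  shows "(\<forall>N::nat. \<exists>F. (\<forall>i<N. is_eigenfunction a kinv m q0 lam (F i)) \<and>
                  (\<forall>i<N. \<forall>j<N. Hinner m (F i) (F j) = (if i = j then 1 else 0)))
       \<and> (\<forall>f. is_eigenfunction a kinv m q0 lam f \<longrightarrow> in_closed_loop_span a kinv m q0 lam f)
       \<and> (\<forall>f. in_H m f \<longrightarrow> in_closed_loop_span a kinv m q0 lam f \<longrightarrow>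
              (\<exists>g. is_eigenfunction a kinv m q0 lam g \<and> Hnorm2 m (state_diff f g) = 0))"
proof -
  obtain B where qb: "AE x in lborel. x \<in> {0..1} \<longrightarrow> \<bar>q0 x\<bar> \<le> B" using assms(5) by blast
  obtain phi phi1 phi2 where ph: "H2_triple phi phi1 phi2" "solves_ode a q0 lam phi phi2"
    "phi 0 - of_real (rho a kinv) * phi1 0 = 0" "phi 1 + of_real (rho a kinv) * phi1 1 = 0"
    "\<exists>x\<in>{0..1}. phi x \<noteq> 0"
    using assms(7) unfolding Sigma0_def by blast
  interpret S: setting a kinv m lam q0 B phi phi1 phi2
    using assms(1,3) qb ph by unfold_locales auto
  show ?thesis using S.part1 S.part2 S.part3 by blast
qed

end
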